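(* Let $d\ge2$ be an integer and $N_1,\dots,N_d$ positive integers. Suppose $\mathbf{b}=(b_1,\dots,b_d)\in\mathbb{Z}^d$ is a nonzero vector with \[ \lambda=\lambda(\mathbf{b}):=\max_{1\le i\le d}\frac{|b_i|}{\gcd(b_1,\dots,b_d)N_i}\le1. \] Then there exists a map $f_{\mathbf{b}}:\mathbb{Z}^d\to\mathbb{Z}^{d-1}$ of the form $f_{\mathbf{b}}(\mathbf{x})=M\mathbf{x}+\mathbf{v}$ with $M\in\mathbb{Z}^{(d-1)\times d}$, $\mathbf{v}\in\mathbb{Z}^{d-1}$, such that: (1) for any $\mathbf{x}_1,\mathbf{x}_2\in\mathbb{Z}^d$, $f_{\mathbf{b}}(\mathbf{x}_1)=f_{\mathbf{b}}(\mathbf{x}_2)$ if and only if $\mathbf{x}_1-\mathbf{x}_2=k\mathbf{b}$ for some $k\in\mathbb{Q}$; (2) there exist positive integers $N_1^*,\dots,N_{d-1}^*\ge\min_{1\le i\le d}N_i$ with $\frac12\le\frac{N_1^*\cdots N_{d-1}^*}{\lambda N_1\cdots N_d}\le2^{d^2}$ and $f_{\mathbf{b}}([N_1]\times\cdots\times[N_d])\subseteq[N_1^*]\times\cdots\times[N_{d-1}^*]$.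
   Context: $[N]=\{1,\dots,N\}$. *)

theory Defs
  imports Complex_Main
begin

text \<open>Vectors in Z^d are represented as functions nat => int, with
  coordinates indexed by {1..d}; coordinates outside are irrelevant.\<close>

definition vgcd :: "nat \<Rightarrow> (nat \<Rightarrow> int) \<Rightarrow> int" where
  "vgcd d b = Gcd (b ` {1..d})"

definition lam :: "nat \<Rightarrow> (nat \<Rightarrow> nat) \<Rightarrow> (nat \<Rightarrow> int) \<Rightarrow> real" where
  "lam d N b = Max ((\<lambda>i. real_of_int \<bar>b i\<bar> / (real_of_int (vgcd d b) * real (N i))) ` {1..d})"

definition affmap :: "nat \<Rightarrow> (nat \<Rightarrow> nat \<Rightarrow> int) \<Rightarrow> (nat \<Rightarrow> int) \<Rightarrow> (nat \<Rightarrow> int) \<Rightarrow> nat \<Rightarrow> int" where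
  "affmap d M v x i = (\<Sum>j=1..d. M i j * x j) + v i"

end

theory Submission
  imports Defs "Jordan_Normal_Form.Determinant"
begin

definition sg :: "nat \<Rightarrow> int vec set \<Rightarrow> bool" where
 "sg n L \<longleftrightarrow> L \<subseteq> carrier_vec n \<and> 0\<^sub>v n \<in> L \<and> (\<forall>x\<in>L. \<forall>y\<in>L. x + y \<in> L) \<and> (\<forall>x\<in>L. -x \<in> L)"

definition lin :: "nat \<Rightarrow> nat \<Rightarrow> (nat \<Rightarrow> int vec) \<Rightarrow> (nat \<Rightarrow> int) \<Rightarrow> int vec" where
 "lin n m F c = vec n (\<lambda>i. \<Sum>k<m. c k * F k $ i)"

definition cm :: "nat \<Rightarrow> (nat \<Rightarrow> int vec) \<Rightarrow> int mat" where
 "cm n F = mat n n (\<lambda>(i,j). F j $ i)"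

definition nrm :: "(nat \<Rightarrow> nat) \<Rightarrow> int vec \<Rightarrow> int" where
 "nrm N x = (\<Sum>i<dim_vec x. int (N i) * \<bar>x$i\<bar>)"

lemma sg_carrier: "sg n L \<Longrightarrow> x \<in> L \<Longrightarrow> x \<in> carrier_vec n"
  unfolding sg_def by auto

lemma sg_add: "sg n L \<Longrightarrow> x \<in> L \<Longrightarrow> y \<in> L \<Longrightarrow> x + y \<in> L"
  unfolding sg_def by auto

lemma sg_neg: "sg n L \<Longrightarrow> x \<in> L \<Longrightarrow> -x \<in> L"
  unfolding sg_def by auto

lemma sg_zero: "sg n L \<Longrightarrow> 0\<^sub>v n \<in> L"
  unfolding sg_def by auto

lemma sg_diff: "sg n L \<Longrightarrow> x \<in> L \<Longrightarrow> y \<in> L \<Longrightarrow> x - y \<in> L"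
proof -
  assume s: "sg n L" and x: "x \<in> L" and y: "y \<in> L"
  have "x - y = x + (-y)" using sg_carrier[OF s x] sg_carrier[OF s y] by auto
  thus ?thesis using sg_add[OF s x sg_neg[OF s y]] by simp
qed

lemma sg_smult_nat: "sg n L \<Longrightarrow> x \<in> L \<Longrightarrow> (int m) \<cdot>\<^sub>v x \<in> L"
proof (induction m)
  case 0
  have "0 \<cdot>\<^sub>v x = 0\<^sub>v n" using sg_carrier[OF 0(1,2)] by (intro eq_vecI) auto
  then show ?case using sg_zero[OF 0(1)] by auto
next
  case (Suc m)
  have "int (Suc m) \<cdot>\<^sub>v x = int m \<cdot>\<^sub>v x + x" using sg_carrier[OF Suc(2,3)]
    by (auto simp: algebra_simps)
  then show ?case using Suc sg_add by metis
qed

lemma sg_smult: "sg n L \<Longrightarrow> x \<in> L \<Longrightarrow> (k::int) \<cdot>\<^sub>v x \<in> L"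
proof (cases "k \<ge> 0")
  case True
  assume s: "sg n L" and x: "x \<in> L"
  then show ?thesis using sg_smult_nat[OF s x, of "nat k"] True by simp
next
  case False
  assume s: "sg n L" and x: "x \<in> L"
  have eq: "k \<cdot>\<^sub>v x = - (int (nat (-k)) \<cdot>\<^sub>v x)" using False sg_carrier[OF s x] by auto
  have m: "- (int (nat (-k)) \<cdot>\<^sub>v x) \<in> L" by (rule sg_neg[OF s sg_smult_nat[OF s x]])
  show ?thesis by (subst eq) (rule m)
qed

lemma lin_carrier[simp]: "lin n m F c \<in> carrier_vec n"
  unfolding lin_def by auto

lemma lin_Suc: "lin n (Suc m) F c = lin n m F c + c m \<cdot>\<^sub>v F m"
  if "(\<And>k. k < Suc m \<Longrightarrow> F k \<in> carrier_vec n)"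
  unfolding lin_def apply (rule eq_vecI) using that[of m] by auto

lemma lin_in: "sg n L \<Longrightarrow> (\<And>k. k < m \<Longrightarrow> F k \<in> L) \<Longrightarrow> lin n m F c \<in> L"
proof (induction m)
  case 0
  have "lin n 0 F c = 0\<^sub>v n" unfolding lin_def by auto
  then show ?case using sg_zero[OF 0(1)] by simp
next
  case (Suc m)
  have "lin n (Suc m) F c = lin n m F c + c m \<cdot>\<^sub>v F m"
    by (rule lin_Suc, rule sg_carrier[OF Suc(2)], rule Suc(3), auto)
  then show ?case using Suc sg_add sg_smult by (metis less_Suc_eq)
qed

definition ext :: "nat \<Rightarrow> int vec \<Rightarrow> int vec" where
  "ext n u = vec (Suc n) (\<lambda>i. if i < n then u$i else 0)"

lemma hnf: "sg n M \<Longrightarrow> \<exists>T. (\<forall>k<n. T k \<in> M) \<and> (\<forall>w\<in>M. \<exists>c. w = lin n n T c)"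
proof (induction n arbitrary: M)
  case 0
  show ?case
  proof (intro exI[of _ "\<lambda>_. 0\<^sub>v 0"] conjI ballI allI impI)
    fix w assume "w \<in> M"
    hence "w \<in> carrier_vec 0" using sg_carrier[OF 0] by auto
    thus "\<exists>c. w = lin 0 0 (\<lambda>_. 0\<^sub>v 0) c" unfolding lin_def by (intro exI[of _ "\<lambda>_. 0"] eq_vecI) auto
  qed auto
next
  case (Suc n)
  note s = Suc(2)
  define M0 where "M0 = {u \<in> carrier_vec n. ext n u \<in> M}"
  have ext_add: "ext n (u + u') = ext n u + ext n u'" if "u \<in> carrier_vec n" "u' \<in> carrier_vec n" for u u'
    unfolding ext_def using that by (intro eq_vecI, auto)
  have ext_neg: "ext n (- u) = - ext n u" if "u \<in> carrier_vec n" for u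
    unfolding ext_def using that by (intro eq_vecI, auto)
  have s0: "sg n M0"
    unfolding sg_def M0_def
  proof (intro conjI ballI)
    have "ext n (0\<^sub>v n) = 0\<^sub>v (Suc n)" unfolding ext_def by (intro eq_vecI, auto)
    thus "0\<^sub>v n \<in> {u \<in> carrier_vec n. ext n u \<in> M}" using sg_zero[OF s] by auto
  next
    fix x y assume "x \<in> {u \<in> carrier_vec n. ext n u \<in> M}" "y \<in> {u \<in> carrier_vec n. ext n u \<in> M}"
    thus "x + y \<in> {u \<in> carrier_vec n. ext n u \<in> M}" using ext_add sg_add[OF s] by auto
  next
    fix x assume "x \<in> {u \<in> carrier_vec n. ext n u \<in> M}"
    thus "- x \<in> {u \<in> carrier_vec n. ext n u \<in> M}" using ext_neg sg_neg[OF s] by auto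
  qed auto
  obtain T0 where T0: "\<forall>k<n. T0 k \<in> M0" "\<forall>w\<in>M0. \<exists>c. w = lin n n T0 c"
    using Suc(1)[OF s0] by blast
  have "\<exists>t\<in>M. \<forall>w\<in>M. \<exists>q. (w - q \<cdot>\<^sub>v t) $ n = 0"
  proof (cases "\<exists>w\<in>M. w $ n \<noteq> 0")
    case False
    show ?thesis
      by (rule bexI[of _ "0\<^sub>v (Suc n)"], use False sg_carrier[OF s] sg_zero[OF s] in auto)
  next
    case True
    then obtain w1 where w1: "w1 \<in> M" "w1 $ n \<noteq> 0" by auto
    have "\<exists>w\<in>M. w $ n > 0"
    proof (cases "w1 $ n > 0")
      case False
      hence "(- w1) $ n > 0" using w1 sg_carrier[OF s w1(1)] by auto
      then show ?thesis using sg_neg[OF s w1(1)] by blast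
    qed (use w1 in auto)
    define P where "P = (\<lambda>p::nat. p > 0 \<and> (\<exists>w\<in>M. w $ n = int p))"
    have "\<exists>p. P p" unfolding P_def using \<open>\<exists>w\<in>M. w $ n > 0\<close>
      by (metis of_nat_0_less_iff pos_int_cases)
    define h where "h = (LEAST p. P p)"
    have Ph: "P h" unfolding h_def using \<open>\<exists>p. P p\<close> LeastI_ex by metis
    then obtain t where t: "t \<in> M" "t $ n = int h" "h > 0" unfolding P_def by auto
    show ?thesis
    proof (rule bexI[OF _ t(1)], intro ballI)
      fix w assume w: "w \<in> M"
      define q where "q = w $ n div int h"
      define z where "z = w - q \<cdot>\<^sub>v t"
      have z: "z \<in> M" unfolding z_def using sg_diff[OF s w sg_smult[OF s t(1)]] .
      have zn: "z $ n = w $ n mod int h" unfolding z_def q_def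
        using sg_carrier[OF s w] sg_carrier[OF s t(1)] t(2)
        by (simp add: minus_div_mult_eq_mod[symmetric] algebra_simps)
      have "z $ n = 0"
      proof (rule ccontr)
        assume "z $ n \<noteq> 0"
        hence pos: "z $ n > 0" using zn t(3) by (metis pos_mod_sign of_nat_0_less_iff order_le_less)
        have lt: "z $ n < int h" using zn t(3) by simp
        have "P (nat (z $ n))" unfolding P_def using pos z by auto
        hence "h \<le> nat (z $ n)" unfolding h_def by (rule Least_le)
        thus False using lt pos by linarith
      qed
      thus "\<exists>q. (w - q \<cdot>\<^sub>v t) $ n = 0" unfolding z_def by blast
    qed
  qed
  then obtain t where t: "t \<in> M" "\<forall>w\<in>M. \<exists>q. (w - q \<cdot>\<^sub>v t) $ n = 0" by blast
  define T where "T = (\<lambda>k. if k < n then ext n (T0 k) else t)"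
  show ?case
  proof (intro exI[of _ T] conjI allI impI ballI)
    fix k assume "k < Suc n"
    thus "T k \<in> M" unfolding T_def using T0(1) t(1) M0_def by auto
  next
    fix w assume w: "w \<in> M"
    obtain q where q: "(w - q \<cdot>\<^sub>v t) $ n = 0" using t(2) w by auto
    define z where "z = w - q \<cdot>\<^sub>v t"
    have zM: "z \<in> M" unfolding z_def using sg_diff[OF s w sg_smult[OF s t(1)]] .
    have zc: "z \<in> carrier_vec (Suc n)" using sg_carrier[OF s zM] .
    define u where "u = vec n (\<lambda>i. z $ i)"
    have zn: "z $ n = 0" using q unfolding z_def .
    have "ext n u = z" using zc zn
      by (intro eq_vecI) (auto simp: ext_def u_def less_Suc_eq)
    hence "u \<in> M0" unfolding M0_def u_def using zM by auto
    then obtain c where c: "u = lin n n T0 c" using T0(2) by auto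
    define c' where "c' = (\<lambda>k. if k < n then c k else q)"
    have wc: "w \<in> carrier_vec (Suc n)" using sg_carrier[OF s w] .
    have tc: "t \<in> carrier_vec (Suc n)" using sg_carrier[OF s t(1)] .
    have "w = lin (Suc n) (Suc n) T c'"
    proof (rule eq_vecI)
      fix i assume i: "i < dim_vec (lin (Suc n) (Suc n) T c')"
      hence i: "i < Suc n" by (simp add: lin_def)
      have "lin (Suc n) (Suc n) T c' $ i = (\<Sum>k<n. c k * T k $ i) + q * t $ i"
        unfolding lin_def c'_def using i by (simp add: T_def)
      also have "(\<Sum>k<n. c k * T k $ i) = (if i < n then u $ i else 0)"
      proof (cases "i < n")
        case True
        have "(\<Sum>k<n. c k * T k $ i) = (\<Sum>k<n. c k * T0 k $ i)"
          using i by (intro sum.cong) (auto simp: T_def ext_def True)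
        also have "\<dots> = u $ i" using c True unfolding lin_def by simp
        finally show ?thesis using True by simp
      next
        case False
        have "(\<Sum>k<n. c k * T k $ i) = 0"
          by (rule sum.neutral, auto simp: T_def ext_def False i)
        then show ?thesis using False by simp
      qed
      also have "\<dots> + q * t $ i = w $ i"
      proof (cases "i < n")
        case True
        then show ?thesis unfolding u_def z_def using wc tc i by auto
      next
        case False
        hence "i = n" using i by auto
        then show ?thesis using q wc tc by auto
      qed
      finally show "w $ i = lin (Suc n) (Suc n) T c' $ i" by simp
    qed (use wc in \<open>auto simp: lin_def\<close>)
    thus "\<exists>c. w = lin (Suc n) (Suc n) T c" by blast
  qed
qed


definition dl :: "nat \<Rightarrow> nat \<Rightarrow> nat" where "dl j i = (if i < j then i else Suc i)"

definition psi :: "nat \<Rightarrow> nat \<Rightarrow> int vec \<Rightarrow> int vec \<Rightarrow> int vec" where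
 "psi n j v y = vec n (\<lambda>i. v$j * y$(dl j i) - y$j * v$(dl j i))"

lemma dl_ne[simp]: "dl j i \<noteq> j" unfolding dl_def by auto
lemma dl_lt: "i < n \<Longrightarrow> dl j i < Suc n" unfolding dl_def by auto
lemma dl_inj: "dl j i = dl j i' \<longleftrightarrow> i = i'" unfolding dl_def by auto
lemma dl_ne2[simp]: "j \<noteq> dl j i" unfolding dl_def by auto
lemma dl_surj: assumes "i < Suc n" "i \<noteq> j" "j < Suc n" shows "\<exists>i'<n. i = dl j i'"
proof (cases "i < j")
  case True
  then show ?thesis using assms by (intro exI[of _ i]) (auto simp: dl_def)
next
  case False
  then show ?thesis using assms by (intro exI[of _ "i - 1"]) (auto simp: dl_def)
qed

lemma lessThan_dl: assumes j: "j < Suc n" shows "{..<Suc n} = insert j (dl j ` {..<n})"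
proof (intro equalityI subsetI)
  fix x assume x: "x \<in> {..<Suc n}"
  show "x \<in> insert j (dl j ` {..<n})"
  proof (cases "x = j")
    case False
    then obtain i' where "i' < n" "x = dl j i'" using dl_surj[of x n j] j x by auto
    thus ?thesis by auto
  qed auto
next
  fix x assume "x \<in> insert j (dl j ` {..<n})" thus "x \<in> {..<Suc n}" using j dl_lt by auto
qed

lemma sum_dl: "j < Suc n \<Longrightarrow> (\<Sum>i<Suc n. f i) = f j + (\<Sum>i<n. f (dl j i))"
proof -
  assume j: "j < Suc n"
  have "(\<Sum>i<Suc n. f i) = (\<Sum>i\<in>insert j (dl j ` {..<n}). f i)" using lessThan_dl[OF j] by simp
  also have "\<dots> = f j + (\<Sum>i\<in>dl j ` {..<n}. f i)" by (rule sum.insert, auto)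
  also have "(\<Sum>i\<in>dl j ` {..<n}. f i) = (\<Sum>i<n. f (dl j i))"
    by (rule sum.reindex_cong[of "dl j"], auto simp: inj_on_def dl_inj)
  finally show ?thesis .
qed

lemma prod_dl: "j < Suc n \<Longrightarrow> (\<Prod>i<Suc n. f i) = f j * (\<Prod>i<n. f (dl j i))"
proof -
  assume j: "j < Suc n"
  have "(\<Prod>i<Suc n. f i) = (\<Prod>i\<in>insert j (dl j ` {..<n}). f i)" using lessThan_dl[OF j] by simp
  also have "\<dots> = f j * (\<Prod>i\<in>dl j ` {..<n}. f i)" by (rule prod.insert, auto)
  also have "(\<Prod>i\<in>dl j ` {..<n}. f i) = (\<Prod>i<n. f (dl j i))"
    by (rule prod.reindex_cong[of "dl j"], auto simp: inj_on_def dl_inj)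
  finally show ?thesis .
qed

lemma psi_carrier[simp]: "psi n j v y \<in> carrier_vec n" unfolding psi_def by auto
lemma psi_dim[simp]: "dim_vec (psi n j v y) = n" unfolding psi_def by auto

lemma psi_add: "y \<in> carrier_vec (Suc n) \<Longrightarrow> y' \<in> carrier_vec (Suc n) \<Longrightarrow> j < Suc n \<Longrightarrow>
   psi n j v (y + y') = psi n j v y + psi n j v y'"
  unfolding psi_def by (intro eq_vecI) (auto simp: dl_lt algebra_simps)

lemma psi_neg: "y \<in> carrier_vec (Suc n) \<Longrightarrow> j < Suc n \<Longrightarrow>
   psi n j v (- y) = - psi n j v y"
  unfolding psi_def by (intro eq_vecI) (auto simp: dl_lt algebra_simps)

lemma psi_sub_v: "y \<in> carrier_vec (Suc n) \<Longrightarrow> v \<in> carrier_vec (Suc n) \<Longrightarrow> j < Suc n \<Longrightarrow>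
   psi n j v (y - q \<cdot>\<^sub>v v) = psi n j v y"
  unfolding psi_def by (intro eq_vecI) (auto simp: dl_lt algebra_simps)

lemma psi_lin: "j < Suc n \<Longrightarrow>
   psi n j v (lin (Suc n) m F c) = lin n m (\<lambda>k. psi n j v (F k)) c"
  unfolding psi_def lin_def
  by (intro eq_vecI) (auto simp: dl_lt algebra_simps sum_distrib_left sum_subtractf)

lemma nrm_nonneg: "nrm N x \<ge> 0" unfolding nrm_def by (intro sum_nonneg) auto

lemma nrm_pos: assumes "x \<in> carrier_vec n" "x \<noteq> 0\<^sub>v n" "\<forall>i<n. N i > 0"
  shows "nrm N x > 0"
proof -
  obtain i where i: "i < n" "x $ i \<noteq> 0" using assms(1,2) by (metis eq_vecI carrier_vecD index_zero_vec)
  have "0 < int (N i) * \<bar>x $ i\<bar>" using i assms(3) by auto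
  also have "\<dots> \<le> nrm N x" unfolding nrm_def
    by (rule member_le_sum[of i "{..<dim_vec x}" "\<lambda>i. int (N i) * \<bar>x $ i\<bar>"]) (use i assms(1) in auto)
  finally show ?thesis .
qed

lemma nrm_smult: "nrm N (k \<cdot>\<^sub>v x) = \<bar>k\<bar> * nrm N x"
  unfolding nrm_def by (auto simp: sum_distrib_left abs_mult algebra_simps)

lemma nrm_neg: "nrm N (- x) = nrm N x"
  unfolding nrm_def by auto

lemma nrm_psi: assumes y: "y \<in> carrier_vec (Suc n)" and v: "v \<in> carrier_vec (Suc n)"
  and j: "j < Suc n" and a: "v $ j > 0"
  shows "v $ j * nrm N y \<le> nrm (\<lambda>i. N (dl j i)) (psi n j v y) + \<bar>y $ j\<bar> * nrm N v"
proof -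
  let ?a = "v $ j"
  have ny: "nrm N y = int (N j) * \<bar>y$j\<bar> + (\<Sum>i<n. int (N (dl j i)) * \<bar>y $ (dl j i)\<bar>)"
    unfolding nrm_def using y sum_dl[OF j] by auto
  have nv: "nrm N v = int (N j) * \<bar>v$j\<bar> + (\<Sum>i<n. int (N (dl j i)) * \<bar>v $ (dl j i)\<bar>)"
    unfolding nrm_def using v sum_dl[OF j] by auto
  have np: "nrm (\<lambda>i. N (dl j i)) (psi n j v y) = (\<Sum>i<n. int (N (dl j i)) * \<bar>psi n j v y $ i\<bar>)"
    unfolding nrm_def by simp
  have le: "?a * (int (N (dl j i)) * \<bar>y $ (dl j i)\<bar>) \<le>
     int (N (dl j i)) * \<bar>psi n j v y $ i\<bar> + \<bar>y $ j\<bar> * (int (N (dl j i)) * \<bar>v $ (dl j i)\<bar>)"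
    if i: "i < n" for i
  proof -
    have eq: "?a * y $ (dl j i) = psi n j v y $ i + y $ j * v $ (dl j i)"
      unfolding psi_def using i by auto
    have "?a * \<bar>y $ (dl j i)\<bar> = \<bar>?a * y $ (dl j i)\<bar>" using a by (simp add: abs_mult)
    also have "\<dots> \<le> \<bar>psi n j v y $ i\<bar> + \<bar>y $ j\<bar> * \<bar>v $ (dl j i)\<bar>"
      unfolding eq by (metis abs_mult abs_triangle_ineq)
    finally have "?a * \<bar>y $ (dl j i)\<bar> \<le> \<bar>psi n j v y $ i\<bar> + \<bar>y $ j\<bar> * \<bar>v $ (dl j i)\<bar>" .
    hence "int (N (dl j i)) * (?a * \<bar>y $ (dl j i)\<bar>) \<le> int (N (dl j i)) * (\<bar>psi n j v y $ i\<bar> + \<bar>y $ j\<bar> * \<bar>v $ (dl j i)\<bar>)"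
      by (rule mult_left_mono) auto
    thus ?thesis by (simp add: algebra_simps)
  qed
  have "?a * nrm N y = \<bar>y$j\<bar> * (int (N j) * \<bar>v$j\<bar>) + (\<Sum>i<n. ?a * (int (N (dl j i)) * \<bar>y $ (dl j i)\<bar>))"
    unfolding ny using a by (simp add: algebra_simps sum_distrib_left)
  also have "\<dots> \<le> \<bar>y$j\<bar> * (int (N j) * \<bar>v$j\<bar>) + (\<Sum>i<n. int (N (dl j i)) * \<bar>psi n j v y $ i\<bar> + \<bar>y $ j\<bar> * (int (N (dl j i)) * \<bar>v $ (dl j i)\<bar>))"
    using le by (intro add_left_mono sum_mono) auto
  also have "\<dots> = nrm (\<lambda>i. N (dl j i)) (psi n j v y) + \<bar>y $ j\<bar> * nrm N v"
    unfolding np nv by (simp add: sum.distrib sum_distrib_left algebra_simps)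
  finally show ?thesis .
qed


lemma cm_carrier[simp]: "cm n F \<in> carrier_mat n n" unfolding cm_def by auto

lemma mat_delete_dl: "X \<in> carrier_mat (Suc n) (Suc n) \<Longrightarrow> i < n \<Longrightarrow> k < n \<Longrightarrow>
  mat_delete X j j' $$ (i,k) = X $$ (dl j i, dl j' k)"
  unfolding mat_delete_def dl_def by auto

lemma det_psi:
  assumes F: "\<And>k. k < Suc n \<Longrightarrow> F k \<in> carrier_vec (Suc n)" and j: "j < Suc n" and v: "F 0 = v"
  shows "v$j * det (cm n (\<lambda>k. psi n j v (F (Suc k)))) * (-1)^j = (v$j)^n * det (cm (Suc n) F)"
proof -
  define a where "a = v $ j"
  define A where "A = cm (Suc n) F"
  define R where "R = mat (Suc n) (Suc n) (\<lambda>(r,c). if r = j then (if c = j then 1 else 0)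
      else if c = r then a else if c = j then - v$r else (0::int))"
  define RA where "RA = mat (Suc n) (Suc n) (\<lambda>(r,k). if r = j then F k $ j else a * F k $ r - v$r * F k $ j)"
  have Rc: "R \<in> carrier_mat (Suc n) (Suc n)" unfolding R_def by auto
  have Ac: "A \<in> carrier_mat (Suc n) (Suc n)" unfolding A_def by auto
  have RAc: "RA \<in> carrier_mat (Suc n) (Suc n)" unfolding RA_def by auto
  have prod: "R * A = RA"
  proof (rule eq_matI)
    fix r k assume r: "r < dim_row RA" and k: "k < dim_col RA"
    hence r: "r < Suc n" and k: "k < Suc n" using RAc by auto
    have "(R * A) $$ (r,k) = (\<Sum>l<Suc n. R $$ (r,l) * F k $ l)"
      using r k Rc Ac unfolding times_mat_def scalar_prod_def A_def cm_def
      by (auto intro!: sum.cong simp: lessThan_atLeast0)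
    also have "\<dots> = RA $$ (r,k)"
    proof (cases "r = j")
      case True
      have "(\<Sum>l<Suc n. R $$ (r,l) * F k $ l) = (\<Sum>l<Suc n. if l = j then F k $ l else 0)"
        using r True by (intro sum.cong) (auto simp: R_def)
      also have "\<dots> = F k $ j" using j by simp
      finally show ?thesis using True r k by (simp add: RA_def)
    next
      case False
      have "(\<Sum>l<Suc n. R $$ (r,l) * F k $ l) =
          (\<Sum>l<Suc n. (if l = r then a * F k $ l else 0) + (if l = j then - v$r * F k $ l else 0))"
        using r False by (intro sum.cong) (auto simp: R_def)
      also have "\<dots> = a * F k $ r - v$r * F k $ j" using j r by (simp add: sum.distrib)
      finally show ?thesis using False r k by (simp add: RA_def)
    qed
    finally show "(R * A) $$ (r,k) = RA $$ (r,k)" .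
  qed (use Rc Ac RAc in auto)
  have detR: "det R = a ^ n"
  proof -
    have "det R = (\<Sum>c<Suc n. R $$ (j,c) * cofactor R j c)" by (rule laplace_expansion_row[OF Rc j])
    also have "\<dots> = (\<Sum>c<Suc n. if c = j then cofactor R j c else 0)"
      using j by (intro sum.cong) (auto simp: R_def)
    also have "\<dots> = cofactor R j j" using j by simp
    also have "\<dots> = det (mat_delete R j j)" unfolding cofactor_def
      by (simp add: mult_2[symmetric] power_mult)
    also have "mat_delete R j j = a \<cdot>\<^sub>m 1\<^sub>m n"
    proof (rule eq_matI)
      fix i k assume "i < dim_row (a \<cdot>\<^sub>m 1\<^sub>m n)" "k < dim_col (a \<cdot>\<^sub>m 1\<^sub>m n)"
      hence i: "i < n" and k: "k < n" by auto
      show "mat_delete R j j $$ (i,k) = (a \<cdot>\<^sub>m 1\<^sub>m n) $$ (i,k)"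
        using mat_delete_dl[OF Rc i k] i k dl_lt[OF i, of j] dl_lt[OF k, of j]
        by (auto simp: R_def dl_inj)
    qed (use Rc in auto)
    also have "det (a \<cdot>\<^sub>m 1\<^sub>m n) = a ^ n" by simp
    finally show ?thesis .
  qed
  have detRA: "det RA = a * (-1)^j * det (cm n (\<lambda>k. psi n j v (F (Suc k))))"
  proof -
    have "det RA = (\<Sum>r<Suc n. RA $$ (r,0) * cofactor RA r 0)" by (rule laplace_expansion_column[OF RAc], simp)
    also have "\<dots> = (\<Sum>r<Suc n. if r = j then a * cofactor RA r 0 else 0)"
      by (intro sum.cong) (auto simp: RA_def v a_def)
    also have "\<dots> = a * cofactor RA j 0" using j by simp
    also have "\<dots> = a * (-1)^j * det (mat_delete RA j 0)" unfolding cofactor_def by simp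
    also have "mat_delete RA j 0 = cm n (\<lambda>k. psi n j v (F (Suc k)))"
    proof (rule eq_matI)
      fix i k assume "i < dim_row (cm n (\<lambda>k. psi n j v (F (Suc k))))" "k < dim_col (cm n (\<lambda>k. psi n j v (F (Suc k))))"
      hence i: "i < n" and k: "k < n" by (auto simp: cm_def)
      show "mat_delete RA j 0 $$ (i,k) = cm n (\<lambda>k. psi n j v (F (Suc k))) $$ (i,k)"
        using mat_delete_dl[OF RAc i k] i k dl_lt[OF i, of j] dl_lt[OF k, of 0]
        by (auto simp: RA_def cm_def psi_def a_def dl_def)
    qed (use RAc in \<open>auto simp: cm_def\<close>)
    finally show ?thesis .
  qed
  have "det RA = a ^ n * det A" using det_mult[OF Rc Ac] prod detR by simp
  hence "a * (-1)^j * det (cm n (\<lambda>k. psi n j v (F (Suc k)))) * (-1)^j = a ^ n * det A * (-1)^j" using detRA by simp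
  moreover have "((-1::int)^j) * (-1)^j = 1" by (simp add: power_mult_distrib[symmetric])
  ultimately show ?thesis unfolding a_def A_def by (simp add: algebra_simps)
qed


fun CC :: "nat \<Rightarrow> int" where
  "CC 0 = 1"
| "CC (Suc n) = int (Suc n) * 2^n * CC n"

lemma lin_dim[simp]: "dim_vec (lin n m F c) = n" unfolding lin_def by simp

lemma CC_pos: "CC n > 0" by (induction n) auto

lemma cm_cong: "(\<And>k. k < n \<Longrightarrow> F k = G k) \<Longrightarrow> cm n F = cm n G"
  unfolding cm_def by (intro eq_matI) auto

lemma lin_cong: "(\<And>k. k < m \<Longrightarrow> F k = G k) \<Longrightarrow> lin n m F c = lin n m G c"
  unfolding lin_def by (intro eq_vecI) auto

lemma det_col_zero: assumes "k < n" "F k = 0\<^sub>v n" shows "det (cm n F) = 0"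
proof -
  have "det (cm n F) = (\<Sum>r<n. cm n F $$ (r,k) * cofactor (cm n F) r k)"
    by (rule laplace_expansion_column[OF cm_carrier assms(1)])
  also have "\<dots> = 0" using assms by (intro sum.neutral) (auto simp: cm_def)
  finally show ?thesis .
qed

lemma cm_mult: assumes G: "\<And>l. l < n \<Longrightarrow> G l \<in> carrier_vec n"
  and B: "\<And>k. k < n \<Longrightarrow> B k = lin n n G (u k)"
  shows "cm n B = cm n G * mat n n (\<lambda>(l,k). u k l)"
proof (rule eq_matI)
  fix r k assume "r < dim_row (cm n G * mat n n (\<lambda>(l,k). u k l))" "k < dim_col (cm n G * mat n n (\<lambda>(l,k). u k l))"
  hence r: "r < n" and k: "k < n" by (auto simp: cm_def)
  have "(cm n G * mat n n (\<lambda>(l,k). u k l)) $$ (r,k) = (\<Sum>l<n. G l $ r * u k l)"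
    using r k unfolding times_mat_def scalar_prod_def cm_def
    by (auto intro!: sum.cong simp: lessThan_atLeast0)
  also have "\<dots> = B k $ r" using B[OF k] r unfolding lin_def by (auto simp: mult.commute intro!: sum.cong)
  finally show "cm n B $$ (r,k) = (cm n G * mat n n (\<lambda>(l,k). u k l)) $$ (r,k)" using r k by (simp add: cm_def)
qed (auto simp: cm_def)

lemma psi_diff: "y \<in> carrier_vec (Suc n) \<Longrightarrow> y' \<in> carrier_vec (Suc n) \<Longrightarrow> j < Suc n \<Longrightarrow>
   psi n j v (y - y') = psi n j v y - psi n j v y'"
  unfolding psi_def by (intro eq_vecI) (auto simp: dl_lt algebra_simps)

lemma psi_self: "psi n j v v = 0\<^sub>v n"
  unfolding psi_def by (intro eq_vecI) auto

lemma main: "sg n L \<Longrightarrow> (\<forall>k<n. B k \<in> L) \<Longrightarrow> det (cm n B) \<noteq> 0 \<Longrightarrow> (\<forall>i<n. N i > 0) \<Longrightarrow>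
  \<exists>V. (\<forall>k<n. V k \<in> L) \<and> det (cm n V) \<noteq> 0 \<and>
      (\<Prod>k<n. nrm N (V k)) \<le> CC n * \<bar>det (cm n B)\<bar> * (\<Prod>i<n. int (N i))"
proof (induction n arbitrary: L B N)
  case 0
  show ?case by (rule exI[of _ B]) (use 0 in auto)
next
  case (Suc n)
  note s = Suc(2) and hB = Suc(3) and hdet = Suc(4) and hN = Suc(5)
  have B0: "B 0 \<noteq> 0\<^sub>v (Suc n)" using det_col_zero[of 0 "Suc n" B] hdet by auto
  have B0L: "B 0 \<in> L" using hB by auto
  obtain v0 where v0: "v0 \<in> L \<and> v0 \<noteq> 0\<^sub>v (Suc n)"
    "\<forall>y. y \<in> L \<and> y \<noteq> 0\<^sub>v (Suc n) \<longrightarrow> nat (nrm N v0) \<le> nat (nrm N y)"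
    using ex_has_least_nat[of "\<lambda>y. y \<in> L \<and> y \<noteq> 0\<^sub>v (Suc n)" "B 0" "\<lambda>y. nat (nrm N y)"] B0 B0L
    by blast
  have v0min: "nrm N v0 \<le> nrm N y" if "y \<in> L" "y \<noteq> 0\<^sub>v (Suc n)" for y
    using v0(2) that nrm_nonneg[of N y] nrm_nonneg[of N v0] by auto
  have v0c: "v0 \<in> carrier_vec (Suc n)" using sg_carrier[OF s] v0 by auto
  define f where "f = (\<lambda>i. int (N i) * \<bar>v0 $ i\<bar>)"
  define mx where "mx = Max (f ` {..<Suc n})"
  have "mx \<in> f ` {..<Suc n}" unfolding mx_def by (rule Max_in) auto
  then obtain j where j: "j < Suc n" "f j = mx" by auto
  have fj: "f i \<le> f j" if "i < Suc n" for i unfolding j(2) mx_def using that by (intro Max_ge) auto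
  have v0j: "v0 $ j \<noteq> 0"
  proof
    assume "v0 $ j = 0"
    hence "f i \<le> 0" if "i < Suc n" for i using fj[OF that] by (simp add: f_def)
    have "v0 $ i = 0" if i: "i < Suc n" for i
    proof (rule ccontr)
      assume "v0 $ i \<noteq> 0"
      hence "0 < \<bar>v0 $ i\<bar>" by simp
      moreover have "0 < int (N i)" using hN i by simp
      ultimately have "0 < f i" unfolding f_def by simp
      thus False using \<open>\<And>i. i < Suc n \<Longrightarrow> f i \<le> 0\<close>[OF i] by simp
    qed
    hence "v0 = 0\<^sub>v (Suc n)" using v0c by (intro eq_vecI) auto
    thus False using v0 by auto
  qed
  define v where "v = (if v0 $ j > 0 then v0 else - v0)"
  have vL: "v \<in> L" unfolding v_def using v0 sg_neg[OF s] by auto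
  have vc: "v \<in> carrier_vec (Suc n)" unfolding v_def using v0c by auto
  have nv: "nrm N v = nrm N v0" unfolding v_def by (auto simp: nrm_neg)
  have vmin: "nrm N v \<le> nrm N y" if "y \<in> L" "y \<noteq> 0\<^sub>v (Suc n)" for y using v0min[OF that] nv by simp
  define a where "a = v $ j"
  have apos: "a > 0" unfolding a_def v_def using v0j j v0c by auto
  have vnz: "v \<noteq> 0\<^sub>v (Suc n)"
  proof
    assume "v = 0\<^sub>v (Suc n)"
    hence "a = 0" unfolding a_def using j by simp
    thus False using apos by simp
  qed
  have absv: "\<bar>v $ i\<bar> = \<bar>v0 $ i\<bar>" if "i < Suc n" for i unfolding v_def using that v0c by auto
  have nvle: "nrm N v \<le> int (Suc n) * int (N j) * a"
  proof -
    have "nrm N v = (\<Sum>i<Suc n. f i)" unfolding nrm_def f_def using vc absv by auto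
    also have "\<dots> \<le> (\<Sum>i<Suc n. f j)" using fj by (intro sum_mono) auto
    also have "\<dots> = int (Suc n) * int (N j) * a" unfolding f_def a_def using absv[OF j(1)] apos
      by (simp add: a_def)
    finally show ?thesis .
  qed
  have nvpos: "nrm N v > 0" using nrm_pos[OF vc vnz] hN by auto
  define N' where "N' = (\<lambda>i. N (dl j i))"
  have hN': "\<forall>i<n. N' i > 0" unfolding N'_def using hN dl_lt by auto
  define M where "M = psi n j v ` L"
  have sM: "sg n M" unfolding sg_def M_def
  proof (intro conjI ballI)
    show "psi n j v ` L \<subseteq> carrier_vec n" by auto
    have "psi n j v (0\<^sub>v (Suc n)) = 0\<^sub>v n" unfolding psi_def using j(1) by (intro eq_vecI) (auto simp: dl_lt)
    thus "0\<^sub>v n \<in> psi n j v ` L" using sg_zero[OF s] by force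
  next
    fix x y assume "x \<in> psi n j v ` L" "y \<in> psi n j v ` L"
    then obtain x' y' where "x' \<in> L" "y' \<in> L" "x = psi n j v x'" "y = psi n j v y'" by auto
    thus "x + y \<in> psi n j v ` L" using psi_add[of x' n y' j v] sg_carrier[OF s] sg_add[OF s] j
      by (metis image_eqI)
  next
    fix x assume "x \<in> psi n j v ` L"
    then obtain x' where "x' \<in> L" "x = psi n j v x'" by auto
    thus "- x \<in> psi n j v ` L" using psi_neg[of x' n j v] sg_carrier[OF s] sg_neg[OF s] j
      by (metis image_eqI)
  qed
  have ker: "\<exists>q. y = q \<cdot>\<^sub>v v" if y: "y \<in> L" "psi n j v y = 0\<^sub>v n" for y
  proof -
    have yc: "y \<in> carrier_vec (Suc n)" using sg_carrier[OF s y(1)] .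
    have rel: "a * y $ i = y $ j * v $ i" if i: "i < Suc n" for i
    proof (cases "i = j")
      case True thus ?thesis by (simp add: a_def)
    next
      case False
      then obtain i' where i': "i' < n" "i = dl j i'" using dl_surj[OF i False j(1)] by auto
      have "psi n j v y $ i' = 0" using y(2) i' by simp
      thus ?thesis unfolding psi_def a_def using i' by simp
    qed
    define q where "q = y $ j div a"
    define r where "r = y $ j mod a"
    define z where "z = y - q \<cdot>\<^sub>v v"
    have zL: "z \<in> L" unfolding z_def using sg_diff[OF s y(1) sg_smult[OF s vL]] .
    have zc: "z \<in> carrier_vec (Suc n)" unfolding z_def using yc vc by auto
    have az: "a \<cdot>\<^sub>v z = r \<cdot>\<^sub>v v"
    proof (rule eq_vecI)
      fix i assume "i < dim_vec (r \<cdot>\<^sub>v v)"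
      hence i: "i < Suc n" using vc by auto
      have "y $ j = q * a + r" unfolding q_def r_def by simp
      hence "a * y $ i - q * a * v $ i = r * v $ i" using rel[OF i] by (simp add: algebra_simps)
      thus "(a \<cdot>\<^sub>v z) $ i = (r \<cdot>\<^sub>v v) $ i" unfolding z_def using i yc vc by (simp add: algebra_simps)
    qed (use zc vc in auto)
    have r0: "r = 0"
    proof (rule ccontr)
      assume "r \<noteq> 0"
      have r01: "0 \<le> r" "r < a" unfolding r_def using apos by simp_all
      hence rpos: "r > 0" and rlt: "r < a" using \<open>r \<noteq> 0\<close> by auto
      have "z \<noteq> 0\<^sub>v (Suc n)"
      proof
        assume "z = 0\<^sub>v (Suc n)"
        hence "a * z $ j = 0" using j by simp
        moreover have "a * z $ j = r * v $ j" using arg_cong[OF az, of "\<lambda>x. x $ j"] j zc vc by simp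
        ultimately have "r * v $ j = 0" by simp
        thus False using rpos apos by (simp add: a_def)
      qed
      hence "nrm N v \<le> nrm N z" using vmin zL by auto
      hence "a * nrm N v \<le> a * nrm N z" using apos by simp
      also have "a * nrm N z = r * nrm N v" using arg_cong[OF az, of "nrm N"] apos rpos
        by (simp add: nrm_smult)
      finally show False using rlt nvpos by (simp add: mult_less_cancel_right)
    qed
    have "z = 0\<^sub>v (Suc n)"
    proof (rule eq_vecI)
      fix i assume "i < dim_vec (0\<^sub>v (Suc n))"
      hence i: "i < Suc n" by simp
      have "a * z $ i = 0" using arg_cong[OF az, of "\<lambda>x. x $ i"] r0 i zc vc by simp
      thus "z $ i = 0\<^sub>v (Suc n) $ i" using apos i by simp
    qed (use zc in auto)
    hence "y = q \<cdot>\<^sub>v v"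
    proof -
      assume z0: "z = 0\<^sub>v (Suc n)"
      show ?thesis
      proof (rule eq_vecI)
        fix i assume "i < dim_vec (q \<cdot>\<^sub>v v)"
        hence i: "i < Suc n" using vc by simp
        have "z $ i = 0" using z0 i by simp
        thus "y $ i = (q \<cdot>\<^sub>v v) $ i" unfolding z_def using i yc vc by simp
      qed (use yc vc in auto)
    qed
    thus ?thesis by blast
  qed

  have lift: "\<exists>y\<in>L. psi n j v y = w \<and> (w \<noteq> 0\<^sub>v n \<longrightarrow> a * nrm N y \<le> 2 * nrm N' w)" if w: "w \<in> M" for w
  proof -
    obtain y0 where y0: "y0 \<in> L" "w = psi n j v y0" using w M_def by auto
    define q where "q = (2 * y0 $ j + a) div (2 * a)"
    define y where "y = y0 - q \<cdot>\<^sub>v v"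
    have yL: "y \<in> L" unfolding y_def using sg_diff[OF s y0(1) sg_smult[OF s vL]] .
    have yc: "y \<in> carrier_vec (Suc n)" using sg_carrier[OF s yL] .
    have py: "psi n j v y = w" unfolding y_def y0(2) by (rule psi_sub_v[OF sg_carrier[OF s y0(1)] vc j(1)])
    have yj: "y $ j = y0 $ j - q * a" unfolding y_def a_def using j(1) vc sg_carrier[OF s y0(1)] by simp
    have yjle: "2 * \<bar>y $ j\<bar> \<le> a"
    proof -
      define t where "t = (2 * y0 $ j + a) mod (2 * a)"
      have e: "2 * y0 $ j + a = q * (2*a) + t" unfolding q_def t_def by (rule div_mult_mod_eq[symmetric])
      have t01: "0 \<le> t" "t < 2 * a" unfolding t_def using apos by auto
      have e2: "2 * y0 $ j + a = 2 * (q * a) + t" using e by (simp add: algebra_simps)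
      have "2 * (y0 $ j - q * a) \<le> a" "- (2 * (y0 $ j - q * a)) \<le> a" using e2 t01 by (simp_all add: algebra_simps)
      hence "\<bar>2 * (y0 $ j - q * a)\<bar> \<le> a" by (simp only: abs_le_iff)
      moreover have "\<bar>2 * (y0 $ j - q * a)\<bar> = 2 * \<bar>y0 $ j - q * a\<bar>" by (subst abs_mult) simp
      ultimately show ?thesis unfolding yj by simp
    qed
    moreover have "w \<noteq> 0\<^sub>v n \<longrightarrow> a * nrm N y \<le> 2 * nrm N' w"
    proof
      assume wnz: "w \<noteq> 0\<^sub>v n"
      have ynz: "y \<noteq> 0\<^sub>v (Suc n)"
      proof
        assume "y = 0\<^sub>v (Suc n)"
        hence "psi n j v y = 0\<^sub>v n" unfolding psi_def using j(1) by (intro eq_vecI) (auto simp: dl_lt)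
        thus False using py wnz by simp
      qed
      have h1: "a * nrm N y \<le> nrm N' w + \<bar>y $ j\<bar> * nrm N v"
        using nrm_psi[OF yc vc j(1), of N] apos py unfolding a_def N'_def by simp
      have h2: "nrm N v \<le> nrm N y" using vmin[OF yL ynz] .
      have h3: "2 * \<bar>y $ j\<bar> * nrm N v \<le> a * nrm N v" using mult_right_mono[OF yjle nrm_nonneg] .
      have h4: "a * nrm N v \<le> a * nrm N y" using h2 apos by simp
      show "a * nrm N y \<le> 2 * nrm N' w" using h1 h3 h4 by linarith
    qed
    ultimately show ?thesis using yL py by blast
  qed
  obtain T where T: "\<forall>k<n. T k \<in> M" "\<forall>w\<in>M. \<exists>c. w = lin n n T c" using hnf[OF sM] by blast
  have "\<forall>k. \<exists>y. k < n \<longrightarrow> y \<in> L \<and> psi n j v y = T k"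
  proof
    fix k show "\<exists>y. k < n \<longrightarrow> y \<in> L \<and> psi n j v y = T k"
    proof (cases "k < n")
      case True
      then obtain y where "y \<in> L" "T k = psi n j v y" using T(1) unfolding M_def by blast
      thus ?thesis by auto
    qed auto
  qed
  then obtain Y where Y: "\<forall>k. k < n \<longrightarrow> Y k \<in> L \<and> psi n j v (Y k) = T k" by (metis choice)
  define FA where "FA = (\<lambda>k. if k = 0 then v else Y (k - 1))"
  have FAL: "FA k \<in> L" if "k < Suc n" for k using vL Y that by (auto simp: FA_def)
  have FAc: "FA k \<in> carrier_vec (Suc n)" if "k < Suc n" for k using FAL[OF that] sg_carrier[OF s] by auto
  have gen: "\<exists>c. y = lin (Suc n) (Suc n) FA c" if yL: "y \<in> L" for y
  proof -
    have "psi n j v y \<in> M" unfolding M_def using yL by auto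
    then obtain c where c: "psi n j v y = lin n n T c" using T(2) by auto
    define x where "x = lin (Suc n) n Y c"
    have xL: "x \<in> L" unfolding x_def using lin_in[OF s] Y by auto
    have px: "psi n j v x = lin n n T c" unfolding x_def psi_lin[OF j(1)] using Y by (intro lin_cong) auto
    have z: "lin n n T c - lin n n T c = 0\<^sub>v n" by (intro eq_vecI) auto
    have "psi n j v (y - x) = 0\<^sub>v n" using psi_diff[OF sg_carrier[OF s yL] sg_carrier[OF s xL] j(1)] c px z by simp
    then obtain q where q: "y - x = q \<cdot>\<^sub>v v" using ker[OF sg_diff[OF s yL xL]] by auto
    define c' where "c' = (\<lambda>k. if k = 0 then q else c (k - 1))"
    have yc: "y \<in> carrier_vec (Suc n)" using sg_carrier[OF s yL] .
    have xc: "x \<in> carrier_vec (Suc n)" using sg_carrier[OF s xL] .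
    have "y = lin (Suc n) (Suc n) FA c'"
    proof (rule eq_vecI)
      fix i assume "i < dim_vec (lin (Suc n) (Suc n) FA c')"
      hence i: "i < Suc n" by simp
      have "lin (Suc n) (Suc n) FA c' $ i = (\<Sum>k<Suc n. c' k * FA k $ i)"
        unfolding lin_def using i by simp
      also have "\<dots> = c' 0 * FA 0 $ i + (\<Sum>k<n. c' (Suc k) * FA (Suc k) $ i)"
        by (rule sum.lessThan_Suc_shift)
      also have "\<dots> = q * v $ i + (\<Sum>k<n. c k * Y k $ i)" by (simp add: c'_def FA_def)
      also have "(\<Sum>k<n. c k * Y k $ i) = x $ i" unfolding x_def lin_def using i by simp
      also have "q * v $ i + x $ i = y $ i" using arg_cong[OF q, of "\<lambda>z. z $ i"] i yc xc vc by simp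
      finally show "y $ i = lin (Suc n) (Suc n) FA c' $ i" by simp
    qed (use yc in auto)
    thus ?thesis by blast
  qed
  have "\<forall>k. \<exists>c. k < Suc n \<longrightarrow> B k = lin (Suc n) (Suc n) FA c" using gen hB by auto
  then obtain u where u: "\<forall>k. k < Suc n \<longrightarrow> B k = lin (Suc n) (Suc n) FA (u k)" by (metis choice)
  have cmB: "cm (Suc n) B = cm (Suc n) FA * mat (Suc n) (Suc n) (\<lambda>(l,k). u k l)"
    by (rule cm_mult) (use FAc u in auto)
  have dBA: "det (cm (Suc n) B) = det (cm (Suc n) FA) * det (mat (Suc n) (Suc n) (\<lambda>(l,k). u k l))"
    unfolding cmB by (rule det_mult[OF cm_carrier], auto)
  have dA0: "det (cm (Suc n) FA) \<noteq> 0" using dBA hdet by auto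
  have dU0: "det (mat (Suc n) (Suc n) (\<lambda>(l,k). u k l)) \<noteq> 0" using dBA hdet by auto
  have dAle: "\<bar>det (cm (Suc n) FA)\<bar> \<le> \<bar>det (cm (Suc n) B)\<bar>"
  proof -
    have "1 \<le> \<bar>det (mat (Suc n) (Suc n) (\<lambda>(l,k). u k l))\<bar>" using dU0 by linarith
    hence "\<bar>det (cm (Suc n) FA)\<bar> * 1 \<le> \<bar>det (cm (Suc n) FA)\<bar> * \<bar>det (mat (Suc n) (Suc n) (\<lambda>(l,k). u k l))\<bar>"
      by (intro mult_left_mono) auto
    thus ?thesis unfolding dBA by (simp add: abs_mult)
  qed
  have dT: "a * det (cm n T) * (-1)^j = a^n * det (cm (Suc n) FA)"
  proof -
    have "cm n (\<lambda>k. psi n j v (FA (Suc k))) = cm n T" using Y by (intro cm_cong) (auto simp: FA_def)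
    moreover have "FA 0 = v" by (simp add: FA_def)
    ultimately show ?thesis using det_psi[of n FA j v, OF FAc j(1)] by (simp add: a_def)
  qed
  have dTabs: "a * \<bar>det (cm n T)\<bar> = a^n * \<bar>det (cm (Suc n) FA)\<bar>"
    using arg_cong[OF dT, of abs] apos by (simp add: abs_mult power_abs)
  have hT0: "det (cm n T) \<noteq> 0" using dTabs dA0 apos by auto
  have hTle: "a * \<bar>det (cm n T)\<bar> \<le> a^n * \<bar>det (cm (Suc n) B)\<bar>"
    unfolding dTabs using dAle apos by (intro mult_left_mono) auto
  obtain W where W: "\<forall>k<n. W k \<in> M" "det (cm n W) \<noteq> 0"
    "(\<Prod>k<n. nrm N' (W k)) \<le> CC n * \<bar>det (cm n T)\<bar> * (\<Prod>i<n. int (N' i))"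
    using Suc.IH[OF sM T(1) hT0 hN'] by blast
  have Wnz: "W k \<noteq> 0\<^sub>v n" if "k < n" for k using det_col_zero[OF that] W(2) by auto
  have "\<forall>k. \<exists>y. k < n \<longrightarrow> y \<in> L \<and> psi n j v y = W k \<and> a * nrm N y \<le> 2 * nrm N' (W k)"
    using lift W(1) Wnz by metis
  then obtain Z where Z: "\<forall>k. k < n \<longrightarrow> Z k \<in> L \<and> psi n j v (Z k) = W k \<and> a * nrm N (Z k) \<le> 2 * nrm N' (W k)"
    by (metis choice)
  define FV where "FV = (\<lambda>k. if k = 0 then v else Z (k - 1))"
  have FVL: "FV k \<in> L" if "k < Suc n" for k using vL Z that by (auto simp: FV_def)
  have FVc: "FV k \<in> carrier_vec (Suc n)" if "k < Suc n" for k using FVL[OF that] sg_carrier[OF s] by auto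
  have dV: "a * det (cm n W) * (-1)^j = a^n * det (cm (Suc n) FV)"
  proof -
    have "cm n (\<lambda>k. psi n j v (FV (Suc k))) = cm n W" using Z by (intro cm_cong) (auto simp: FV_def)
    moreover have "FV 0 = v" by (simp add: FV_def)
    ultimately show ?thesis using det_psi[of n FV j v, OF FVc j(1)] by (simp add: a_def)
  qed
  have dV0: "det (cm (Suc n) FV) \<noteq> 0" using dV W(2) apos by auto
  define PZ where "PZ = (\<Prod>k<n. nrm N (Z k))"
  define PW where "PW = (\<Prod>k<n. nrm N' (W k))"
  define PN where "PN = (\<Prod>i<n. int (N' i))"
  define dB where "dB = \<bar>det (cm (Suc n) B)\<bar>"
  define dTT where "dTT = \<bar>det (cm n T)\<bar>"
  have PZ0: "PZ \<ge> 0" unfolding PZ_def by (intro prod_nonneg) (auto simp: nrm_nonneg)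
  have PN0: "PN \<ge> 0" unfolding PN_def by (intro prod_nonneg) auto
  have P1: "a^n * PZ \<le> 2^n * PW"
  proof -
    have "a^n * PZ = (\<Prod>k<n. a * nrm N (Z k))" unfolding PZ_def by (simp add: prod.distrib)
    also have "\<dots> \<le> (\<Prod>k<n. 2 * nrm N' (W k))"
      using Z apos by (intro prod_mono) (auto simp: nrm_nonneg)
    also have "\<dots> = 2^n * PW" unfolding PW_def by (simp add: prod.distrib)
    finally show ?thesis .
  qed
  have P2: "PW \<le> CC n * dTT * PN" using W(3) unfolding PW_def dTT_def PN_def .
  have CC0: "CC n \<ge> 0" using CC_pos[of n] by simp
  have "a^n * (a * PZ) = a * (a^n * PZ)" by (simp add: algebra_simps)
  also have "\<dots> \<le> a * (2^n * PW)" using P1 apos by (intro mult_left_mono) auto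
  also have "\<dots> \<le> a * (2^n * (CC n * dTT * PN))" using P2 apos by (intro mult_left_mono) auto
  also have "\<dots> = (2^n * CC n * PN) * (a * dTT)" by (simp add: algebra_simps)
  also have "\<dots> \<le> (2^n * CC n * PN) * (a^n * dB)" using hTle CC0 PN0 unfolding dTT_def dB_def
    by (intro mult_left_mono) auto
  also have "\<dots> = a^n * (2^n * CC n * dB * PN)" by (simp add: algebra_simps)
  finally have "a^n * (a * PZ) \<le> a^n * (2^n * CC n * dB * PN)" .
  hence P3: "a * PZ \<le> 2^n * CC n * dB * PN" using apos by (simp add: mult_le_cancel_left)
  have "(\<Prod>k<Suc n. nrm N (FV k)) = nrm N (FV 0) * (\<Prod>k<n. nrm N (FV (Suc k)))"
    by (rule prod.lessThan_Suc_shift)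
  also have "\<dots> = nrm N v * PZ" unfolding PZ_def FV_def by simp
  also have "\<dots> \<le> (int (Suc n) * int (N j) * a) * PZ" using nvle PZ0 by (intro mult_right_mono) auto
  also have "\<dots> = (int (Suc n) * int (N j)) * (a * PZ)" by (simp add: algebra_simps)
  also have "\<dots> \<le> (int (Suc n) * int (N j)) * (2^n * CC n * dB * PN)" using P3 by (intro mult_left_mono) auto
  also have "\<dots> = CC (Suc n) * dB * (\<Prod>i<Suc n. int (N i))"
    unfolding prod_dl[OF j(1), of "\<lambda>i. int (N i)"] PN_def N'_def by (simp add: algebra_simps)
  finally have bound: "(\<Prod>k<Suc n. nrm N (FV k)) \<le> CC (Suc n) * \<bar>det (cm (Suc n) B)\<bar> * (\<Prod>i<Suc n. int (N i))"
    unfolding dB_def .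
  show ?case using FVL dV0 bound by blast
qed


fun gg :: "(nat \<Rightarrow> int) \<Rightarrow> int \<Rightarrow> nat \<Rightarrow> int" where
  "gg c bm 0 = \<bar>bm\<bar>"
| "gg c bm (Suc k) = gcd (gg c bm k) (c k)"

lemma sum_split_k: "k < (n::nat) \<Longrightarrow> (\<Sum>i<n. if i < k then A i else if i = k then B else (0::int)) = (\<Sum>i<k. A i) + B"
proof (induction n)
  case 0 then show ?case by simp
next
  case (Suc n)
  show ?case
  proof (cases "k < n")
    case True
    then show ?thesis using Suc by simp
  next
    case False
    hence "k = n" using Suc by simp
    moreover have "(\<Sum>i<n. if i < k then A i else if i = k then B else 0) = (\<Sum>i<k. A i)"
      using \<open>k = n\<close> by (intro sum.cong) auto
    ultimately show ?thesis by simp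
  qed
qed

lemma aux_div: "g \<noteq> 0 \<Longrightarrow> (x::int) = g * \<alpha> \<Longrightarrow> y = g * \<beta> \<Longrightarrow> x * (y div g) - (x div g) * y = 0"
  by simp

lemma tri_basis:
  fixes c :: "nat \<Rightarrow> int" and bm G :: int
  assumes bm: "bm \<noteq> 0" and G: "G > 0" "G dvd bm" "\<forall>i<n. G dvd c i"
  shows "\<exists>T. (\<forall>k<n. T k \<in> carrier_vec n \<and> bm dvd (\<Sum>i<n. c i * T k $ i)) \<and> det (cm n T) \<noteq> 0
     \<and> \<bar>det (cm n T)\<bar> * G \<le> \<bar>bm\<bar>"
proof -
  let ?g = "gg c bm"
  have gpos: "?g k > 0" for k by (induction k) (use bm in auto)
  have gdvd1: "?g (Suc k) dvd ?g k" for k by simp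
  have gdvd2: "?g (Suc k) dvd c k" for k by simp
  have Gdvd: "k \<le> n \<Longrightarrow> G dvd ?g k" for k
    by (induction k) (use G in auto)
  have bez: "\<exists>z. bm dvd (\<Sum>i<k. c i * z i) - ?g k" for k
  proof (induction k)
    case 0 then show ?case by simp
  next
    case (Suc k)
    then obtain z where z: "bm dvd (\<Sum>i<k. c i * z i) - ?g k" by auto
    obtain s t where st: "s * ?g k + t * c k = gcd (?g k) (c k)" using bezout_int by blast
    define z' where "z' = (\<lambda>i. if i < k then s * z i else t)"
    have eq: "(\<Sum>i<Suc k. c i * z' i) - ?g (Suc k) = s * ((\<Sum>i<k. c i * z i) - ?g k)"
    proof -
      have "(\<Sum>i<k. c i * z' i) = s * (\<Sum>i<k. c i * z i)"
        unfolding z'_def by (simp add: sum_distrib_left algebra_simps)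
      thus ?thesis using st by (simp add: z'_def algebra_simps)
    qed
    have "bm dvd (\<Sum>i<Suc k. c i * z' i) - ?g (Suc k)" unfolding eq using z by simp
    thus ?case by blast
  qed
  have "\<forall>k. \<exists>z. bm dvd (\<Sum>i<k. c i * z i) - ?g k" using bez by blast
  then obtain Z where Z0: "\<forall>k. bm dvd (\<Sum>i<k. c i * Z k i) - ?g k" using choice[of "\<lambda>k z. bm dvd (\<Sum>i<k. c i * z i) - ?g k"] by blast
  hence Z: "\<And>k. bm dvd (\<Sum>i<k. c i * Z k i) - ?g k" by blast
  define h where "h = (\<lambda>k. ?g k div ?g (Suc k))"
  define T where "T = (\<lambda>k. vec n (\<lambda>i. if i < k then - (c k div ?g (Suc k)) * Z k i else if i = k then h k else 0))"
  have mem: "bm dvd (\<Sum>i<n. c i * T k $ i)" if k: "k < n" for k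
  proof -
    have "(\<Sum>i<n. c i * T k $ i) = (\<Sum>i<n. if i < k then c i * (- (c k div ?g (Suc k)) * Z k i) else if i = k then c k * h k else 0)"
      unfolding T_def by (intro sum.cong) auto
    also have "\<dots> = (\<Sum>i<k. c i * (- (c k div ?g (Suc k)) * Z k i)) + c k * h k"
      by (rule sum_split_k[OF k])
    also have "(\<Sum>i<k. c i * (- (c k div ?g (Suc k)) * Z k i)) = (\<Sum>i<k. (- (c k div ?g (Suc k))) * (c i * Z k i))"
      by (intro sum.cong) (auto simp: algebra_simps)
    also have "\<dots> = (- (c k div ?g (Suc k))) * (\<Sum>i<k. c i * Z k i)"
      by (simp only: sum_distrib_left[symmetric])
    also have "(- (c k div ?g (Suc k))) * (\<Sum>i<k. c i * Z k i) + c k * h k = - (c k div ?g (Suc k)) * ((\<Sum>i<k. c i * Z k i) - ?g k)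
        + (c k * h k - (c k div ?g (Suc k)) * ?g k)"
      by (simp add: algebra_simps)
    also have "c k * h k - (c k div ?g (Suc k)) * ?g k = 0"
    proof -
      obtain \<alpha> where a: "c k = ?g (Suc k) * \<alpha>" using gdvd2 by blast
      obtain \<beta> where b: "?g k = ?g (Suc k) * \<beta>" using gdvd1 by blast
      have "?g (Suc k) \<noteq> 0" using gpos[of "Suc k"] by linarith
      thus ?thesis unfolding h_def using aux_div[OF _ a b] by blast
    qed
    finally show ?thesis using Z[of k] by simp
  qed
  have Tc: "T k \<in> carrier_vec n" for k unfolding T_def by simp
  have Tent: "T k $ i = (if i < k then - (c k div ?g (Suc k)) * Z k i else if i = k then h k else 0)"
    if "i < n" for i k unfolding T_def using that by simp
  have ut: "upper_triangular (cm n T)"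
    unfolding upper_triangular_def
  proof (intro allI impI)
    fix i j assume i: "i < dim_row (cm n T)" and ji: "j < i"
    hence "i < n" by (simp add: cm_def)
    thus "cm n T $$ (i, j) = 0" using ji Tent[of i j] by (simp add: cm_def)
  qed
  have "det (cm n T) = prod_list (diag_mat (cm n T))"
    by (rule det_upper_triangular[OF ut cm_carrier])
  also have "\<dots> = (\<Prod>k = 0..<n. cm n T $$ (k,k))" by (simp add: prod_list_diag_prod cm_def)
  also have "\<dots> = (\<Prod>k<n. h k)" unfolding lessThan_atLeast0[symmetric]
    by (intro prod.cong) (auto simp: cm_def Tent)
  finally have detT: "det (cm n T) = (\<Prod>k<n. h k)" .
  have tele: "(\<Prod>k<K. h k) * ?g K = \<bar>bm\<bar>" for K
  proof (induction K)
    case 0 then show ?case by simp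
  next
    case (Suc K)
    have e: "h K * ?g (Suc K) = ?g K" unfolding h_def using gdvd1[of K] by simp
    have "(\<Prod>k<Suc K. h k) * ?g (Suc K) = (\<Prod>k<K. h k) * (h K * ?g (Suc K))"
      by (simp only: prod.lessThan_Suc mult.assoc)
    also have "\<dots> = (\<Prod>k<K. h k) * ?g K" by (simp only: e)
    finally show ?case using Suc.IH by simp
  qed
  have dpos: "det (cm n T) > 0"
  proof -
    have "det (cm n T) * ?g n = \<bar>bm\<bar>" using tele[of n] detT by simp
    hence "det (cm n T) * ?g n > 0" using bm by simp
    thus ?thesis using gpos[of n] by (simp add: zero_less_mult_iff)
  qed
  have "G \<le> ?g n" using Gdvd[of n] gpos[of n] by (simp add: zdvd_imp_le)
  hence "det (cm n T) * G \<le> det (cm n T) * ?g n" using dpos by simp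
  also have "\<dots> = \<bar>bm\<bar>" using tele[of n] detT by simp
  finally have bd: "\<bar>det (cm n T)\<bar> * G \<le> \<bar>bm\<bar>" using dpos by simp
  show ?thesis
  proof (rule exI[of _ T])
    have dne: "det (cm n T) \<noteq> 0" using dpos by simp
    show "(\<forall>k<n. T k \<in> carrier_vec n \<and> bm dvd (\<Sum>i<n. c i * T k $ i)) \<and> det (cm n T) \<noteq> 0 \<and> \<bar>det (cm n T)\<bar> * G \<le> \<bar>bm\<bar>"
      using Tc mem dne bd by blast
  qed
qed

lemma CC_bound: "CC n * 2^n \<le> 2^(n*n)"
proof (induction n)
  case 0 then show ?case by simp
next
  case (Suc n)
  have "int (Suc n) \<le> 2^n" by (induction n) auto
  have "CC (Suc n) * 2^(Suc n) = (int (Suc n) * 2^(Suc n)) * (CC n * 2^n)" by (simp add: algebra_simps)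
  also have "\<dots> \<le> (int (Suc n) * 2^(Suc n)) * 2^(n*n)" using Suc by (intro mult_left_mono) auto
  also have "\<dots> \<le> (2^n * 2^(Suc n)) * 2^(n*n)" using \<open>int (Suc n) \<le> 2^n\<close> by (intro mult_right_mono) auto
  also have "\<dots> = 2^(Suc n * Suc n)" by (simp add: power_add[symmetric] algebra_simps)
  finally show ?case .
qed

lemma det_kernel: assumes d: "det (cm n V) \<noteq> 0" and w: "w \<in> carrier_vec n"
  and h: "\<forall>k<n. (\<Sum>i<n. V k $ i * w $ i) = 0" shows "w = 0\<^sub>v n"
proof (rule ccontr)
  assume "w \<noteq> 0\<^sub>v n"
  have "(cm n V)\<^sup>T *\<^sub>v w = 0\<^sub>v n"
  proof (rule eq_vecI)
    fix k assume "k < dim_vec (0\<^sub>v n :: int vec)"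
    hence k: "k < n" by simp
    have "((cm n V)\<^sup>T *\<^sub>v w) $ k = (\<Sum>i<n. V k $ i * w $ i)"
      using k w unfolding cm_def by (auto simp: mult_mat_vec_def scalar_prod_def lessThan_atLeast0)
    thus "((cm n V)\<^sup>T *\<^sub>v w) $ k = 0\<^sub>v n $ k" using h k by simp
  qed (auto simp: cm_def)
  hence "det ((cm n V)\<^sup>T) = 0" using det_0_iff_vec_prod_zero[of "(cm n V)\<^sup>T" n] w \<open>w \<noteq> 0\<^sub>v n\<close>
    by auto
  thus False using d det_transpose[OF cm_carrier] by simp
qed

lemma sum_1_n: "(\<Sum>j\<in>{1..n}. f j) = (\<Sum>i<n. f (Suc i))"
  by (induction n) auto

lemma prod_1_n: "(\<Prod>j\<in>{1..n}. f j) = (\<Prod>i<n. f (Suc i))"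
  by (induction n) auto


lemma sum_split_m: "1 \<le> m \<Longrightarrow> m \<le> Suc n \<Longrightarrow>
  (\<Sum>j\<in>{1..Suc n}. f j) = f m + (\<Sum>i<n. f (Suc (dl (m-1) i)))"
proof -
  assume m: "1 \<le> m" "m \<le> Suc n"
  have "(\<Sum>j\<in>{1..Suc n}. f j) = (\<Sum>i<Suc n. f (Suc i))" by (rule sum_1_n)
  also have "\<dots> = f (Suc (m-1)) + (\<Sum>i<n. f (Suc (dl (m-1) i)))" by (rule sum_dl) (use m in auto)
  finally show ?thesis using m by simp
qed

lemma prod_split_m: "1 \<le> m \<Longrightarrow> m \<le> Suc n \<Longrightarrow>
  (\<Prod>j\<in>{1..Suc n}. f j) = f m * (\<Prod>i<n. f (Suc (dl (m-1) i)))"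
proof -
  assume m: "1 \<le> m" "m \<le> Suc n"
  have "(\<Prod>j\<in>{1..Suc n}. f j) = (\<Prod>i<Suc n. f (Suc i))" by (rule prod_1_n)
  also have "\<dots> = f (Suc (m-1)) * (\<Prod>i<n. f (Suc (dl (m-1) i)))" by (rule prod_dl) (use m in auto)
  finally show ?thesis using m by simp
qed

lemma idx_range: "i < n \<Longrightarrow> 1 \<le> m \<Longrightarrow> m \<le> Suc n \<Longrightarrow>
  Suc (dl (m-1) i) \<in> {1..Suc n} \<and> Suc (dl (m-1) i) \<noteq> m"
  using dl_lt[of i n "m-1"] by (auto simp: dl_def)

lemma idx_surj: "j \<in> {1..Suc n} \<Longrightarrow> j \<noteq> m \<Longrightarrow> 1 \<le> m \<Longrightarrow> m \<le> Suc n \<Longrightarrow> \<exists>i<n. j = Suc (dl (m-1) i)"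
proof -
  assume j: "j \<in> {1..Suc n}" "j \<noteq> m" and m: "1 \<le> m" "m \<le> Suc n"
  have "j - 1 < Suc n" "j - 1 \<noteq> m - 1" "m - 1 < Suc n" using j m by auto
  then obtain i where "i < n" "j - 1 = dl (m-1) i" using dl_surj[of "j-1" n "m-1"] by blast
  thus ?thesis using j by (intro exI[of _ i]) auto
qed

lemma idx_inv: "(if Suc (dl (m-1) i) < m then Suc (dl (m-1) i) - 1 else Suc (dl (m-1) i) - 2) = i"
  "1 \<le> m \<Longrightarrow> Suc (dl (m-1) i) \<noteq> m"
  unfolding dl_def by auto

theorem corollary4p6:
  fixes d :: nat and N :: "nat \<Rightarrow> nat" and b :: "nat \<Rightarrow> int"
  assumes hd: "d \<ge> 2"
    and hN: "\<forall>i\<in>{1..d}. N i > 0"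
    and hb: "\<exists>i\<in>{1..d}. b i \<noteq> 0"
    and hlam: "lam d N b \<le> 1"
  shows "\<exists>(M :: nat \<Rightarrow> nat \<Rightarrow> int) (v :: nat \<Rightarrow> int).
     (\<forall>x1 x2 :: nat \<Rightarrow> int.
        (\<forall>i\<in>{1..d-1}. affmap d M v x1 i = affmap d M v x2 i) \<longleftrightarrow>
        (\<exists>k :: rat. \<forall>j\<in>{1..d}. of_int (x1 j - x2 j) = k * of_int (b j)))
   \<and> (\<exists>Ns :: nat \<Rightarrow> nat.
        (\<forall>i\<in>{1..d-1}. Ns i > 0 \<and> Ns i \<ge> Min (N ` {1..d}))
      \<and> 1/2 \<le> real (\<Prod>i=1..d-1. Ns i) / (lam d N b * real (\<Prod>i=1..d. N i))
      \<and> real (\<Prod>i=1..d-1. Ns i) / (lam d N b * real (\<Prod>i=1..d. N i)) \<le> 2 ^ (d^2)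
      \<and> (\<forall>x :: nat \<Rightarrow> int. (\<forall>j\<in>{1..d}. 1 \<le> x j \<and> x j \<le> int (N j)) \<longrightarrow>
           (\<forall>i\<in>{1..d-1}. 1 \<le> affmap d M v x i \<and> affmap d M v x i \<le> int (Ns i))))"
proof -
  define n where "n = d - 1"
  have dn: "d = Suc n" using hd unfolding n_def by auto
  have n1: "n \<ge> 1" using hd unfolding n_def by auto
  define g where "g = vgcd d b"
  have gdvd: "g dvd b i" if "i \<in> {1..d}" for i unfolding g_def vgcd_def using that by (auto intro: Gcd_dvd)
  obtain i0 where i0: "i0 \<in> {1..d}" "b i0 \<noteq> 0" using hb by auto
  have gpos: "g > 0"
  proof -
    have "\<not> (b ` {1..d} \<subseteq> {0})"
    proof
      assume "b ` {1..d} \<subseteq> {0}"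
      hence "b i0 \<in> {0}" using i0(1) by blast
      thus False using i0(2) by simp
    qed
    hence "g \<noteq> 0" unfolding g_def vgcd_def by simp
    moreover have "g \<ge> 0" unfolding g_def vgcd_def by simp
    ultimately show ?thesis by simp
  qed
  define rt where "rt = (\<lambda>i. real_of_int \<bar>b i\<bar> / (real_of_int (vgcd d b) * real (N i)))"
  have lam_eq: "lam d N b = Max (rt ` {1..d})" unfolding lam_def rt_def ..
  have "Max (rt ` {1..d}) \<in> rt ` {1..d}" using hd by (intro Max_in) auto
  then obtain m where m: "m \<in> {1..d}" "rt m = lam d N b" using lam_eq by auto
  have rt_le: "rt i \<le> rt m" if "i \<in> {1..d}" for i using m(2) lam_eq that by (auto intro: Max_ge)
  have cross: "\<bar>b i\<bar> * int (N m) \<le> \<bar>b m\<bar> * int (N i)" if i: "i \<in> {1..d}" for i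
  proof -
    have P1: "real_of_int g * real (N i) > 0" "real_of_int g * real (N m) > 0" using hN i m(1) gpos by auto
    define A where "A = real_of_int \<bar>b i\<bar>"
    define C where "C = real_of_int \<bar>b m\<bar>"
    define P where "P = real_of_int g * real (N i)"
    define Q where "Q = real_of_int g * real (N m)"
    have "A / P \<le> C / Q" using rt_le[OF i] unfolding rt_def g_def A_def C_def P_def Q_def .
    hence "(A / P) * (P * Q) \<le> (C / Q) * (P * Q)" using P1 unfolding P_def Q_def
      by (intro mult_right_mono) auto
    moreover have "P \<noteq> 0" "Q \<noteq> 0" using hN i m(1) gpos unfolding P_def Q_def by auto
    hence "(A / P) * (P * Q) = A * Q" "(C / Q) * (P * Q) = C * P" by (simp_all add: field_simps)
    ultimately have "A * Q \<le> C * P" by metis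
    hence "real_of_int \<bar>b i\<bar> * (real_of_int g * real (N m)) \<le> real_of_int \<bar>b m\<bar> * (real_of_int g * real (N i))"
      unfolding A_def C_def P_def Q_def .
    hence "real_of_int g * (real_of_int \<bar>b i\<bar> * real (N m)) \<le> real_of_int g * (real_of_int \<bar>b m\<bar> * real (N i))"
      by (simp add: algebra_simps)
    hence "real_of_int \<bar>b i\<bar> * real (N m) \<le> real_of_int \<bar>b m\<bar> * real (N i)" using gpos by simp
    hence "real_of_int (\<bar>b i\<bar> * int (N m)) \<le> real_of_int (\<bar>b m\<bar> * int (N i))" by simp
    thus ?thesis by (simp only: of_int_le_iff)
  qed
  have bm0: "b m \<noteq> 0"
  proof
    assume "b m = 0"
    hence "\<bar>b i0\<bar> * int (N m) \<le> 0" using cross[OF i0(1)] by simp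
    moreover have "int (N m) > 0" using hN m(1) by auto
    ultimately show False using i0(2) by (simp add: mult_le_0_iff)
  qed
  define bm where "bm = b m"
  define idx where "idx = (\<lambda>i. Suc (dl (m-1) i))"
  have m1: "1 \<le> m" "m \<le> Suc n" using m(1) dn by auto
  have idxr: "idx i \<in> {1..d}" "idx i \<noteq> m" if "i < n" for i
    using idx_range[OF that m1] unfolding idx_def dn by auto
  define c where "c = (\<lambda>i. b (idx i))"
  have gc: "\<forall>i<n. g dvd c i" unfolding c_def using gdvd idxr by auto
  obtain T where T: "\<forall>k<n. T k \<in> carrier_vec n \<and> bm dvd (\<Sum>i<n. c i * T k $ i)" "det (cm n T) \<noteq> 0"
     "\<bar>det (cm n T)\<bar> * g \<le> \<bar>bm\<bar>"
    using tri_basis[of bm g n c] bm0 gpos gdvd[OF m(1)] gc unfolding bm_def by blast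
  define L' where "L' = {y \<in> carrier_vec n. bm dvd (\<Sum>i<n. c i * y $ i)}"
  have sL: "sg n L'" unfolding sg_def L'_def
  proof (intro conjI ballI)
    fix x y assume x: "x \<in> {y \<in> carrier_vec n. bm dvd (\<Sum>i<n. c i * y $ i)}"
      and y: "y \<in> {y \<in> carrier_vec n. bm dvd (\<Sum>i<n. c i * y $ i)}"
    have "(\<Sum>i<n. c i * (x + y) $ i) = (\<Sum>i<n. c i * x $ i) + (\<Sum>i<n. c i * y $ i)"
    proof -
      have "(\<Sum>i<n. c i * (x + y) $ i) = (\<Sum>i<n. c i * x $ i + c i * y $ i)"
        using x y by (intro sum.cong) (auto simp: algebra_simps)
      thus ?thesis by (simp add: sum.distrib)
    qed
    thus "x + y \<in> {y \<in> carrier_vec n. bm dvd (\<Sum>i<n. c i * y $ i)}" using x y by auto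
  next
    fix x assume x: "x \<in> {y \<in> carrier_vec n. bm dvd (\<Sum>i<n. c i * y $ i)}"
    have "(\<Sum>i<n. c i * (- x) $ i) = - (\<Sum>i<n. c i * x $ i)"
    proof -
      have "(\<Sum>i<n. c i * (- x) $ i) = (\<Sum>i<n. - (c i * x $ i))"
        using x by (intro sum.cong) auto
      thus ?thesis by (simp add: sum_negf)
    qed
    thus "- x \<in> {y \<in> carrier_vec n. bm dvd (\<Sum>i<n. c i * y $ i)}" using x by auto
  qed auto
  define N' where "N' = (\<lambda>i. N (idx i))"
  have hN': "\<forall>i<n. N' i > 0" unfolding N'_def using hN idxr by auto
  obtain V where V: "\<forall>k<n. V k \<in> L'" "det (cm n V) \<noteq> 0"
    "(\<Prod>k<n. nrm N' (V k)) \<le> CC n * \<bar>det (cm n T)\<bar> * (\<Prod>i<n. int (N' i))"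
    using main[OF sL _ T(2) hN'] T(1) unfolding L'_def by blast
  have Vc: "V k \<in> carrier_vec n" if "k < n" for k using V(1) that unfolding L'_def by auto
  define S where "S = (\<lambda>k. \<Sum>i<n. c i * V k $ i)"
  have Sd: "bm dvd S k" if "k < n" for k using V(1) that unfolding L'_def S_def by auto
  define R where "R = (\<lambda>k j. if j = m then - (S k div bm) else V k $ (if j < m then j - 1 else j - 2))"
  have Ridx: "R k (idx i) = V k $ i" for k i
    using idx_inv[of m i] m1 unfolding R_def idx_def by simp
  have Rm: "R k m = - (S k div bm)" for k unfolding R_def by simp
  have nrmV: "nrm N' (V k) = (\<Sum>i<n. int (N' i) * \<bar>V k $ i\<bar>)" if "k < n" for k
    unfolding nrm_def using Vc[OF that] by simp
  have Ridx': "R k (Suc (dl (m-1) i)) = V k $ i" for k i using Ridx[of k i] unfolding idx_def .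
  have split_d: "(\<Sum>j\<in>{1..d}. f j) = f m + (\<Sum>i<n. f (idx i))" for f :: "nat \<Rightarrow> int"
    unfolding dn idx_def by (rule sum_split_m[OF m1])
  have rowb: "(\<Sum>j\<in>{1..d}. R k j * b j) = 0" if k: "k < n" for k
  proof -
    have "(\<Sum>j\<in>{1..d}. R k j * b j) = R k m * b m + (\<Sum>i<n. R k (idx i) * b (idx i))"
      by (rule split_d)
    also have "(\<Sum>i<n. R k (idx i) * b (idx i)) = S k" unfolding S_def c_def Ridx by (simp add: mult.commute)
    also have "R k m * b m = - (S k div bm) * bm" unfolding Rm bm_def ..
    finally show ?thesis using Sd[OF k] by simp
  qed
  define nf where "nf = (\<lambda>k. \<Sum>j\<in>{1..d}. int (N j) * \<bar>R k j\<bar>)"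
  have nf_split: "nf k = int (N m) * \<bar>R k m\<bar> + nrm N' (V k)" if k: "k < n" for k
  proof -
    have "nf k = int (N m) * \<bar>R k m\<bar> + (\<Sum>i<n. int (N' i) * \<bar>V k $ i\<bar>)"
      unfolding nf_def split_d N'_def Ridx ..
    thus ?thesis using nrmV[OF k] by simp
  qed
  have Rm_le: "int (N m) * \<bar>R k m\<bar> \<le> nrm N' (V k)" if k: "k < n" for k
  proof -
    have Sabs: "\<bar>S k\<bar> = \<bar>bm\<bar> * \<bar>S k div bm\<bar>" using Sd[OF k] by (metis abs_mult dvd_mult_div_cancel)
    have "\<bar>S k\<bar> \<le> (\<Sum>i<n. \<bar>c i * V k $ i\<bar>)" unfolding S_def by (rule sum_abs)
    hence "int (N m) * \<bar>S k\<bar> \<le> int (N m) * (\<Sum>i<n. \<bar>c i * V k $ i\<bar>)" by (intro mult_left_mono) auto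
    also have "\<dots> = (\<Sum>i<n. (\<bar>c i\<bar> * int (N m)) * \<bar>V k $ i\<bar>)"
      by (simp add: sum_distrib_left abs_mult algebra_simps)
    also have "\<dots> \<le> (\<Sum>i<n. (\<bar>bm\<bar> * int (N' i)) * \<bar>V k $ i\<bar>)"
      using cross idxr(1) by (intro sum_mono mult_right_mono) (auto simp: c_def N'_def bm_def)
    also have "\<dots> = \<bar>bm\<bar> * nrm N' (V k)" unfolding nrmV[OF k] by (simp add: sum_distrib_left algebra_simps)
    finally have "\<bar>bm\<bar> * (int (N m) * \<bar>R k m\<bar>) \<le> \<bar>bm\<bar> * nrm N' (V k)" unfolding Rm Sabs
      by (simp add: algebra_simps)
    moreover have "\<bar>bm\<bar> > 0" using bm0 unfolding bm_def by simp
    ultimately show ?thesis by simp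
  qed
  have nf_le: "nf k \<le> 2 * nrm N' (V k)" if "k < n" for k using nf_split[OF that] Rm_le[OF that] by simp
  have nf_nonneg: "nf k \<ge> 0" for k unfolding nf_def by (intro sum_nonneg) auto
  have Vnz: "\<exists>i<n. V k $ i \<noteq> 0" if k: "k < n" for k
  proof (rule ccontr)
    assume "\<not> (\<exists>i<n. V k $ i \<noteq> 0)"
    hence "V k = 0\<^sub>v n" using Vc[OF k] by (intro eq_vecI) auto
    thus False using det_col_zero[OF k, of V] V(2) by simp
  qed
  have Nmin: "Min (N ` {1..d}) \<le> N j" if "j \<in> {1..d}" for j using that by (intro Min_le) auto
  have nf_ge: "int (N (idx i)) * \<bar>V k $ i\<bar> \<le> nf k" if k: "k < n" and i: "i < n" for k i
  proof -
    have "int (N' i) * \<bar>V k $ i\<bar> \<le> nrm N' (V k)" unfolding nrmV[OF k] using i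
      by (intro member_le_sum[where f = "\<lambda>i. int (N' i) * \<bar>V k $ i\<bar>"]) auto
    thus ?thesis using nf_split[OF k] unfolding N'_def by (simp add: add_increasing)
  qed
  have nf_big: "nf k \<ge> int (Min (N ` {1..d})) \<and> nf k \<ge> 1" if k: "k < n" for k
  proof -
    obtain i where i: "i < n" "V k $ i \<noteq> 0" using Vnz[OF k] by auto
    have "int (N (idx i)) * 1 \<le> int (N (idx i)) * \<bar>V k $ i\<bar>" using i(2) by (intro mult_left_mono) auto
    hence h: "int (N (idx i)) \<le> nf k" using nf_ge[OF k i(1)] by simp
    have "Min (N ` {1..d}) \<le> N (idx i)" using Nmin idxr(1)[OF i(1)] by auto
    moreover have "N (idx i) > 0" using hN idxr(1)[OF i(1)] by blast
    hence "N (idx i) \<ge> 1" by simp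
    ultimately show ?thesis using h by auto
  qed
  have sumabs: "(\<Sum>j\<in>{1..d}. \<bar>R k j\<bar>) \<ge> 1" if k: "k < n" for k
  proof -
    obtain i where i: "i < n" "V k $ i \<noteq> 0" using Vnz[OF k] by auto
    have "\<bar>R k (idx i)\<bar> \<le> (\<Sum>j\<in>{1..d}. \<bar>R k j\<bar>)"
      by (rule member_le_sum) (use idxr(1)[OF i(1)] in auto)
    thus ?thesis using i(2) Ridx by simp
  qed
  define lo where "lo = (\<lambda>k. \<Sum>j\<in>{1..d}. if R k j \<ge> 0 then R k j else R k j * int (N j))"
  define Mx where "Mx = (\<lambda>i j. R (i - 1) j)"
  define vv where "vv = (\<lambda>i. 1 - lo (i - 1))"
  have box: "1 \<le> affmap d Mx vv x i \<and> affmap d Mx vv x i \<le> nf (i - 1)"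
    if x: "\<forall>j\<in>{1..d}. 1 \<le> x j \<and> x j \<le> int (N j)" and i: "i \<in> {1..d-1}" for x i
  proof -
    define k where "k = i - 1"
    have k: "k < n" using i unfolding k_def n_def by auto
    define t where "t = (\<lambda>j. R k j * x j - (if R k j \<ge> 0 then R k j else R k j * int (N j)))"
    have e: "affmap d Mx vv x i = 1 + (\<Sum>j\<in>{1..d}. t j)"
      unfolding affmap_def Mx_def vv_def lo_def t_def k_def by (simp add: sum_subtractf)
    have tb: "0 \<le> t j \<and> t j \<le> \<bar>R k j\<bar> * (int (N j) - 1)" if j: "j \<in> {1..d}" for j
    proof -
    have xj: "1 \<le> x j" "x j \<le> int (N j)" using x j by auto
    show ?thesis
    proof (cases "R k j \<ge> 0")
      case True
      have "t j = R k j * (x j - 1)" unfolding t_def using True by (simp add: algebra_simps)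
      moreover have "R k j * (x j - 1) \<le> R k j * (int (N j) - 1)" using xj True by (intro mult_left_mono) auto
      ultimately show ?thesis using xj True by simp
    next
      case False
      have "t j = (- R k j) * (int (N j) - x j)" unfolding t_def using False by (simp add: algebra_simps)
      moreover have "(- R k j) * (int (N j) - x j) \<le> (- R k j) * (int (N j) - 1)" using xj False by (intro mult_left_mono) auto
      moreover have "0 \<le> (- R k j) * (int (N j) - x j)" using xj False by (intro mult_nonneg_nonneg) auto
      ultimately show ?thesis using xj False by (simp only: abs_if) simp
    qed
    qed
    have "(\<Sum>j\<in>{1..d}. t j) \<ge> 0" using tb by (intro sum_nonneg) auto
    moreover have "(\<Sum>j\<in>{1..d}. t j) \<le> (\<Sum>j\<in>{1..d}. \<bar>R k j\<bar> * (int (N j) - 1))" using tb by (intro sum_mono) auto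
    moreover have "(\<Sum>j\<in>{1..d}. \<bar>R k j\<bar> * (int (N j) - 1)) = nf k - (\<Sum>j\<in>{1..d}. \<bar>R k j\<bar>)"
      unfolding nf_def by (simp add: sum_subtractf[symmetric] algebra_simps)
    ultimately show ?thesis using e sumabs[OF k] unfolding k_def by simp
  qed
  have kerc: "(\<forall>i\<in>{1..d-1}. affmap d Mx vv x1 i = affmap d Mx vv x2 i) \<longleftrightarrow>
        (\<exists>k :: rat. \<forall>j\<in>{1..d}. of_int (x1 j - x2 j) = k * of_int (b j))" for x1 x2
  proof -
    define z where "z = (\<lambda>j. x1 j - x2 j)"
    have aff: "affmap d Mx vv x1 i = affmap d Mx vv x2 i \<longleftrightarrow> (\<Sum>j\<in>{1..d}. R (i-1) j * z j) = 0" for i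
    proof -
      have "(\<Sum>j\<in>{1..d}. R (i-1) j * z j) = (\<Sum>j\<in>{1..d}. R (i-1) j * x1 j) - (\<Sum>j\<in>{1..d}. R (i-1) j * x2 j)"
        unfolding z_def by (simp add: sum_subtractf[symmetric] algebra_simps)
      thus ?thesis unfolding affmap_def Mx_def by auto
    qed
    show ?thesis
    proof
      assume H: "\<forall>i\<in>{1..d-1}. affmap d Mx vv x1 i = affmap d Mx vv x2 i"
      have H': "(\<Sum>j\<in>{1..d}. R k j * z j) = 0" if k: "k < n" for k
      proof -
        have "Suc k \<in> {1..d-1}" using k unfolding n_def by auto
        thus ?thesis using H aff[of "Suc k"] by auto
      qed
      define w where "w = vec n (\<lambda>i. bm * z (idx i) - z m * c i)"
      have wc: "w \<in> carrier_vec n" unfolding w_def by simp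
      have "\<forall>k<n. (\<Sum>i<n. V k $ i * w $ i) = 0"
      proof (intro allI impI)
        fix k assume k: "k < n"
        have sp: "(\<Sum>j\<in>{1..d}. R k j * z j) = R k m * z m + (\<Sum>i<n. V k $ i * z (idx i))"
          unfolding split_d Ridx ..
        have "(\<Sum>i<n. V k $ i * w $ i) = (\<Sum>i<n. bm * (V k $ i * z (idx i)) - z m * (c i * V k $ i))"
          unfolding w_def by (intro sum.cong) (auto simp: algebra_simps)
        also have "\<dots> = bm * (\<Sum>i<n. V k $ i * z (idx i)) - z m * S k"
          unfolding S_def by (simp add: sum_subtractf sum_distrib_left)
        also have "(\<Sum>i<n. V k $ i * z (idx i)) = - (R k m * z m)" using sp H'[OF k] by simp
        also have "bm * (- (R k m * z m)) - z m * S k = z m * (bm * (S k div bm) - S k)"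
          unfolding Rm by (simp add: algebra_simps)
        also have "bm * (S k div bm) = S k" using Sd[OF k] by simp
        finally show "(\<Sum>i<n. V k $ i * w $ i) = 0" by simp
      qed
      hence w0: "w = 0\<^sub>v n" by (rule det_kernel[OF V(2) wc])
      have rel: "bm * z (idx i) = z m * c i" if "i < n" for i
        using arg_cong[OF w0, of "\<lambda>v. v $ i"] that unfolding w_def by simp
      show "\<exists>k :: rat. \<forall>j\<in>{1..d}. of_int (x1 j - x2 j) = k * of_int (b j)"
      proof (intro exI[of _ "of_int (z m) / of_int bm"] ballI)
        fix j assume j: "j \<in> {1..d}"
        show "of_int (x1 j - x2 j) = of_int (z m) / of_int bm * (of_int (b j) :: rat)"
        proof (cases "j = m")
          case True
          thus ?thesis using bm0 unfolding z_def bm_def by simp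
        next
          case False
          obtain i where i: "i < n" "j = idx i" using idx_surj[of j n m] j False m1 dn unfolding idx_def by auto
          have "of_int (bm * z j) = (of_int (z m * b j) :: rat)" using rel[OF i(1)] i(2) unfolding c_def by simp
          hence "of_int bm * of_int (z j) = (of_int (z m) * of_int (b j) :: rat)" by simp
          thus ?thesis using bm0 unfolding z_def bm_def by (simp add: field_simps)
        qed
      qed
    next
      assume "\<exists>k :: rat. \<forall>j\<in>{1..d}. of_int (x1 j - x2 j) = k * of_int (b j)"
      then obtain q :: rat where q: "\<forall>j\<in>{1..d}. of_int (x1 j - x2 j) = q * of_int (b j)" by auto
      show "\<forall>i\<in>{1..d-1}. affmap d Mx vv x1 i = affmap d Mx vv x2 i"
      proof
        fix i assume i: "i \<in> {1..d-1}"
        have "(of_int (\<Sum>j\<in>{1..d}. R (i-1) j * z j) :: rat) = (\<Sum>j\<in>{1..d}. of_int (R (i-1) j) * (q * of_int (b j)))"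
          using q unfolding z_def by (simp add: of_int_sum)
        also have "\<dots> = q * of_int (\<Sum>j\<in>{1..d}. R (i-1) j * b j)"
          by (simp add: of_int_sum sum_distrib_left algebra_simps)
        also have "(\<Sum>j\<in>{1..d}. R (i-1) j * b j) = 0" using rowb[of "i-1"] i unfolding n_def by auto
        finally have "(of_int (\<Sum>j\<in>{1..d}. R (i-1) j * z j) :: rat) = 0" by (simp only: of_int_0 mult_zero_right)
        hence "(\<Sum>j\<in>{1..d}. R (i-1) j * z j) = 0" by (simp only: of_int_eq_0_iff)
        thus "affmap d Mx vv x1 i = affmap d Mx vv x2 i" using aff by simp
      qed
    qed
  qed
  define X where "X = lam d N b * real (\<Prod>i=1..d. N i)"
  define PN where "PN = (\<Prod>i<n. int (N' i))"
  have PNpos: "PN > 0" unfolding PN_def using hN' by (intro prod_pos) auto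
  have prodN: "(\<Prod>i=1..d. N i) = N m * (\<Prod>i<n. N (idx i))" unfolding dn idx_def by (rule prod_split_m[OF m1])
  have lam_m: "lam d N b = real_of_int \<bar>bm\<bar> / (real_of_int g * real (N m))"
    using m(2) unfolding rt_def g_def bm_def by simp
  have Nm: "real (N m) > 0" using hN m(1) by auto
  have Xg: "X * real_of_int g = real_of_int \<bar>bm\<bar> * real_of_int PN"
  proof -
    have "real (\<Prod>i=1..d. N i) = real (N m) * real_of_int PN" unfolding prodN PN_def N'_def by simp
    thus ?thesis unfolding X_def lam_m using Nm gpos by (simp add: field_simps)
  qed
  have Xpos: "X > 0"
  proof -
    have "real_of_int \<bar>bm\<bar> * real_of_int PN > 0" using PNpos bm0 unfolding bm_def by simp
    hence "X * real_of_int g > 0" using Xg by simp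
    thus ?thesis using gpos by (simp add: zero_less_mult_iff)
  qed
  have P1: "(\<Prod>k<n. nf k) \<le> 2^n * (\<Prod>k<n. nrm N' (V k))"
  proof -
    have "(\<Prod>k<n. nf k) \<le> (\<Prod>k<n. 2 * nrm N' (V k))"
      using nf_nonneg nf_le by (intro prod_mono) auto
    thus ?thesis by (simp add: prod.distrib)
  qed
  have "g * (\<Prod>k<n. nf k) \<le> g * (2^n * (\<Prod>k<n. nrm N' (V k)))" using P1 gpos by (intro mult_left_mono) auto
  also have "\<dots> \<le> g * (2^n * (CC n * \<bar>det (cm n T)\<bar> * PN))"
    using V(3) gpos unfolding PN_def by (intro mult_left_mono) auto
  also have "\<dots> = (2^n * CC n * PN) * (\<bar>det (cm n T)\<bar> * g)" by (simp add: algebra_simps)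
  also have "\<dots> \<le> (2^n * CC n * PN) * \<bar>bm\<bar>" using T(3) CC_pos[of n] PNpos by (intro mult_left_mono) auto
  also have "\<dots> = (CC n * 2^n) * (\<bar>bm\<bar> * PN)" by (simp add: algebra_simps)
  also have "\<dots> \<le> 2^(n*n) * (\<bar>bm\<bar> * PN)" using CC_bound[of n] PNpos by (intro mult_right_mono) auto
  finally have Pint: "g * (\<Prod>k<n. nf k) \<le> 2^(n*n) * (\<bar>bm\<bar> * PN)" .
  have Preal: "real_of_int (\<Prod>k<n. nf k) \<le> 2^(n*n) * X"
  proof -
    have "real_of_int (g * (\<Prod>k<n. nf k)) \<le> real_of_int (2^(n*n) * (\<bar>bm\<bar> * PN))"
      using Pint by (simp only: of_int_le_iff)
    moreover have "real_of_int g * (2^(n*n) * X) = 2^(n*n) * (X * real_of_int g)" by (simp add: algebra_simps)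
    moreover have "2^(n*n) * (X * real_of_int g) = 2^(n*n) * (real_of_int \<bar>bm\<bar> * real_of_int PN)" using Xg by simp
    moreover have "2^(n*n) * (real_of_int \<bar>bm\<bar> * real_of_int PN) = real_of_int (2^(n*n) * (\<bar>bm\<bar> * PN))" by simp
    moreover have "real_of_int (g * (\<Prod>k<n. nf k)) = real_of_int g * real_of_int (\<Prod>k<n. nf k)" by simp
    ultimately have "real_of_int g * real_of_int (\<Prod>k<n. nf k) \<le> real_of_int g * (2^(n*n) * X)"
      by linarith
    thus ?thesis using gpos by simp
  qed
  obtain n' where n': "n = Suc n'" using n1 by (cases n) auto
  define Q where "Q = (\<Prod>k<n'. nf (Suc k))"
  have Q1: "Q \<ge> 1" unfolding Q_def using nf_big n' by (intro prod_ge_1) auto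
  have PQ: "(\<Prod>k<n. nf k) = nf 0 * Q" unfolding n' Q_def by (rule prod.lessThan_Suc_shift)
  have nf01: "nf 0 \<ge> 1" using nf_big n' by auto
  define NS0 where "NS0 = max (nat (nf 0)) (nat \<lceil>X / (2 * real_of_int Q)\<rceil>)"
  define Ns where "Ns = (\<lambda>i. if i = 1 then NS0 else nat (nf (i - 1)))"
  have prodNs: "real (\<Prod>i=1..d-1. Ns i) = real NS0 * real_of_int Q"
  proof -
    have "(\<Prod>i=1..d-1. Ns i) = (\<Prod>k<n. Ns (Suc k))" unfolding n_def[symmetric] by (rule prod_1_n)
    also have "\<dots> = Ns (Suc 0) * (\<Prod>k<n'. Ns (Suc (Suc k)))" unfolding n' by (rule prod.lessThan_Suc_shift)
    also have "\<dots> = NS0 * (\<Prod>k<n'. nat (nf (Suc k)))" unfolding Ns_def by simp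
    finally have e: "(\<Prod>i=1..d-1. Ns i) = NS0 * (\<Prod>k<n'. nat (nf (Suc k)))" .
    have "real (\<Prod>k<n'. nat (nf (Suc k))) = (\<Prod>k<n'. real (nat (nf (Suc k))))" by simp
    also have "\<dots> = (\<Prod>k<n'. real_of_int (nf (Suc k)))" using nf_nonneg by (intro prod.cong) auto
    also have "\<dots> = real_of_int Q" unfolding Q_def by simp
    finally show ?thesis unfolding e by simp
  qed
  define q where "q = real_of_int Q"
  have qpos: "q \<ge> 1" unfolding q_def using Q1 by simp
  have lower: "real (\<Prod>i=1..d-1. Ns i) \<ge> X / 2"
  proof -
    have a2: "real (nat \<lceil>X / (2 * q)\<rceil>) \<le> real NS0" unfolding NS0_def q_def by simp
    have a0: "X / (2 * q) \<le> real_of_int \<lceil>X / (2 * q)\<rceil>" by (rule le_of_int_ceiling)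
    have a1: "real_of_int \<lceil>X / (2 * q)\<rceil> \<le> real (nat \<lceil>X / (2 * q)\<rceil>)" by simp
    have "X / (2 * q) \<le> real NS0" using a0 a1 a2 by linarith
    hence "X / (2 * q) * q \<le> real NS0 * q" using qpos by (intro mult_right_mono) auto
    thus ?thesis unfolding prodNs q_def[symmetric] using qpos by simp
  qed
  have upper: "real (\<Prod>i=1..d-1. Ns i) \<le> 2^(n*n) * X + X / 2"
  proof (cases "nat (nf 0) \<ge> nat \<lceil>X / (2 * q)\<rceil>")
    case True
    hence "NS0 = nat (nf 0)" unfolding NS0_def q_def by (rule max.absorb1)
    hence "real (\<Prod>i=1..d-1. Ns i) = real_of_int (\<Prod>k<n. nf k)" unfolding prodNs PQ using nf01 by simp
    thus ?thesis using Preal Xpos by simp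
  next
    case False
    hence le: "nat (nf 0) \<le> nat \<lceil>X / (2 * real_of_int Q)\<rceil>" unfolding q_def by linarith
    hence "NS0 = nat \<lceil>X / (2 * q)\<rceil>" unfolding NS0_def q_def by (rule max.absorb2)
    moreover have "real (nat \<lceil>X / (2 * q)\<rceil>) \<le> X / (2 * q) + 1" using Xpos qpos
      by (simp add: of_nat_nat)
    ultimately have "real NS0 * q \<le> (X / (2 * q) + 1) * q" using qpos by (intro mult_right_mono) auto
    also have "\<dots> = X / 2 + q" using qpos by (simp add: field_simps)
    also have "q \<le> real_of_int (\<Prod>k<n. nf k)"
    proof -
      have "q * 1 \<le> q * real_of_int (nf 0)" using nf01 qpos by (intro mult_left_mono) auto
      thus ?thesis unfolding PQ q_def by (simp add: algebra_simps)
    qed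
    finally show ?thesis unfolding prodNs q_def[symmetric] using Preal by simp
  qed
  have pw: "(2::real)^(n*n) * X + X / 2 \<le> 2^(d^2) * X"
  proof -
    have "n * n + 1 \<le> d^2" unfolding dn by (simp add: power2_eq_square)
    hence "(2::real)^(n*n + 1) \<le> 2^(d^2)" by (intro power_increasing) auto
    moreover have "(1::real) \<le> 2^(n*n)" by simp
    moreover have "(2::real)^(n*n + 1) = 2 * 2^(n*n)" by simp
    ultimately have "(2::real)^(n*n) + 1/2 \<le> 2^(d^2)" by linarith
    hence "((2::real)^(n*n) + 1/2) * X \<le> 2^(d^2) * X" using Xpos by (intro mult_right_mono) auto
    thus ?thesis by (simp add: algebra_simps)
  qed
  have part2: "\<exists>Ns :: nat \<Rightarrow> nat.
        (\<forall>i\<in>{1..d-1}. Ns i > 0 \<and> Ns i \<ge> Min (N ` {1..d}))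
      \<and> 1/2 \<le> real (\<Prod>i=1..d-1. Ns i) / (lam d N b * real (\<Prod>i=1..d. N i))
      \<and> real (\<Prod>i=1..d-1. Ns i) / (lam d N b * real (\<Prod>i=1..d. N i)) \<le> 2 ^ (d^2)
      \<and> (\<forall>x :: nat \<Rightarrow> int. (\<forall>j\<in>{1..d}. 1 \<le> x j \<and> x j \<le> int (N j)) \<longrightarrow>
           (\<forall>i\<in>{1..d-1}. 1 \<le> affmap d Mx vv x i \<and> affmap d Mx vv x i \<le> int (Ns i)))"
  proof (intro exI[of _ Ns] conjI ballI allI impI)
    have Nsge: "int (Ns i) \<ge> nf (i - 1)" if i: "i \<in> {1..d-1}" for i
    proof -
      have "i - 1 < n" using i unfolding n_def by auto
      hence "nf (i - 1) \<ge> 0" using nf_nonneg by auto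
      thus ?thesis unfolding Ns_def NS0_def by auto
    qed
    fix i assume i: "i \<in> {1..d-1}"
    have k: "i - 1 < n" using i unfolding n_def by auto
    show "Ns i > 0" using Nsge[OF i] nf_big[OF k] by linarith
    show "Ns i \<ge> Min (N ` {1..d})" using Nsge[OF i] nf_big[OF k] by linarith
  next
    show "1/2 \<le> real (\<Prod>i=1..d-1. Ns i) / (lam d N b * real (\<Prod>i=1..d. N i))"
      using lower Xpos unfolding X_def[symmetric] by (simp add: field_simps)
  next
    show "real (\<Prod>i=1..d-1. Ns i) / (lam d N b * real (\<Prod>i=1..d. N i)) \<le> 2 ^ (d^2)"
      using upper pw Xpos unfolding X_def[symmetric] by (simp add: field_simps)
  next
    fix x :: "nat \<Rightarrow> int" and i
    assume x: "\<forall>j\<in>{1..d}. 1 \<le> x j \<and> x j \<le> int (N j)" and i: "i \<in> {1..d-1}"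
    have "i - 1 < n" using i unfolding n_def by auto
    hence "nf (i - 1) \<ge> 0" using nf_nonneg by auto
    hence "int (Ns i) \<ge> nf (i - 1)" unfolding Ns_def NS0_def by auto
    thus "1 \<le> affmap d Mx vv x i" "affmap d Mx vv x i \<le> int (Ns i)" using box[OF x i] by auto
  qed
  show ?thesis using kerc part2 by blast
qed

end
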